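(* Let $G$ be a $2$-connected near triangulation with outer cycle $C$ such that $V(G)\setminus V(C)\neq\emptyset$ and there is no vertex $v\in V(G)\setminus V(C)$ such that $v,u,w$ bound a face (facial triangle) for some edge $uw\in E(C)$. Let $S=\{v\in V(C): v \text{ has a neighbor in } V(G)\setminus V(C)\}$. Then: (i) $|S|\ge 3$; (ii) $G$ has at least three vertices of degree two lying in $V(C)$, and if $G$ has exactly three vertices of degree two in $V(C)$, then $|S|=3$ and $T=G[S]$ is a triangle such that all vertices of $V(G)\setminus V(C)$ lie in the interior of the closed disc bounded by $T$.
   Context: A near triangulation is a plane graph in which every face except possibly the outer face is bounded by a triangle; when $2$-connected, its outer face is bounded by a cycle, the outer cycle. $G[S]$ denotes the subgraph induced by $S$. *)

theory Defs
  imports Main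
begin

text \<open>Combinatorial model of a 2-connected near triangulation (a simple plane graph
whose bounded faces are all triangles and whose outer face is bounded by a cycle),
i.e. a triangulated closed disc.  The graph is given by a vertex set V, an edge set E
(2-element vertex sets) and the set F of bounded (inner) faces, each given by its
3-element vertex set.\<close>

definition adj_rel :: "'a set \<Rightarrow> 'a set set \<Rightarrow> ('a \<times> 'a) set" where
  "adj_rel W D = {(x, y). x \<in> W \<and> y \<in> W \<and> {x, y} \<in> D}"

definition graph_connected :: "'a set \<Rightarrow> 'a set set \<Rightarrow> bool" where
  "graph_connected W D \<longleftrightarrow> (\<forall>x\<in>W. \<forall>y\<in>W. (x, y) \<in> (adj_rel W D)\<^sup>*)"

definition gdeg :: "'a set set \<Rightarrow> 'a \<Rightarrow> nat" where
  "gdeg D v = card {u. {v, u} \<in> D}"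

definition simple_graph :: "'a set \<Rightarrow> 'a set set \<Rightarrow> bool" where
  "simple_graph W D \<longleftrightarrow> finite W \<and> (\<forall>e\<in>D. e \<subseteq> W \<and> card e = 2)"

definition is_cycle_graph :: "'a set \<Rightarrow> 'a set set \<Rightarrow> bool" where
  "is_cycle_graph W D \<longleftrightarrow> simple_graph W D \<and> card W \<ge> 3 \<and> graph_connected W D
     \<and> (\<forall>v\<in>W. gdeg D v = 2)"

definition is_path_graph :: "'a set \<Rightarrow> 'a set set \<Rightarrow> bool" where
  "is_path_graph W D \<longleftrightarrow> simple_graph W D \<and> card W \<ge> 2 \<and> graph_connected W D
     \<and> card D = card W - 1 \<and> (\<forall>v\<in>W. gdeg D v \<le> 2)"

text \<open>Edges lying on exactly one inner face: the edges of the outer cycle.\<close>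
definition outer_edges :: "'a set set \<Rightarrow> 'a set set \<Rightarrow> 'a set set" where
  "outer_edges E F = {e\<in>E. card {f\<in>F. e \<subseteq> f} = 1}"

definition outer_vertices :: "'a set set \<Rightarrow> 'a set set \<Rightarrow> 'a set" where
  "outer_vertices E F = \<Union> (outer_edges E F)"

definition link_vertices :: "'a set set \<Rightarrow> 'a \<Rightarrow> 'a set" where
  "link_vertices E v = {u. {v, u} \<in> E}"

definition link_edges :: "'a set set \<Rightarrow> 'a \<Rightarrow> 'a set set" where
  "link_edges F v = {{u, w} | u w. u \<noteq> v \<and> w \<noteq> v \<and> u \<noteq> w \<and> {v, u, w} \<in> F}"

definition near_triangulation :: "'a set \<Rightarrow> 'a set set \<Rightarrow> 'a set set \<Rightarrow> bool" where
  "near_triangulation V E F \<longleftrightarrow>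
     simple_graph V E \<and> F \<noteq> {} \<and>
     (\<forall>f\<in>F. f \<subseteq> V \<and> card f = 3) \<and>
     E = {e. card e = 2 \<and> (\<exists>f\<in>F. e \<subseteq> f)} \<and>
     V = \<Union> F \<and>
     (\<forall>e\<in>E. card {f\<in>F. e \<subseteq> f} \<le> 2) \<and>
     is_cycle_graph (outer_vertices E F) (outer_edges E F) \<and>
     (\<forall>v\<in>V - outer_vertices E F. is_cycle_graph (link_vertices E v) (link_edges F v)) \<and>
     (\<forall>v\<in>outer_vertices E F. is_path_graph (link_vertices E v) (link_edges F v)) \<and>
     graph_connected V E \<and>
     int (card V) - int (card E) + int (card F) = 1"

definition reach_avoiding :: "'a set \<Rightarrow> 'a set set \<Rightarrow> 'a set \<Rightarrow> 'a \<Rightarrow> 'a \<Rightarrow> bool" where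
  "reach_avoiding V E X x y \<longleftrightarrow> (x, y) \<in> (adj_rel (V - X) E)\<^sup>*"

end

theory Submission
  imports Defs
begin

definition symd :: "'b set \<Rightarrow> 'b set \<Rightarrow> 'b set" where
  "symd A B = (A - B) \<union> (B - A)"

lemma odd_card_symd:
  assumes "finite A" "finite B"
  shows "odd (card (symd A B)) \<longleftrightarrow> (odd (card A) \<noteq> odd (card B))"
proof -
  have d: "(A - B) \<inter> (B - A) = {}" by blast
  have c1: "card (symd A B) = card (A - B) + card (B - A)"
    unfolding symd_def using assms d by (simp add: card_Un_disjoint)
  have i1: "card (A \<inter> B) \<le> card A" using assms by (intro card_mono) auto
  have i2: "card (A \<inter> B) \<le> card B" using assms by (intro card_mono) auto
  have "card (A - B) = card A - card (A \<inter> B)" using assms by (simp add: card_Diff_subset_Int)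
  moreover have "card (B - A) = card B - card (A \<inter> B)" using assms
    by (simp add: card_Diff_subset_Int Int_commute)
  ultimately show ?thesis using c1 i1 i2 by auto
qed

lemma symd_filter: "{x \<in> symd A B. P x} = symd {x\<in>A. P x} {x\<in>B. P x}"
  unfolding symd_def by blast

lemma symd_empty[simp]: "symd A {} = A" "symd {} A = A" "symd A A = {}"
  unfolding symd_def by auto

lemma symd_comm: "symd A B = symd B A" unfolding symd_def by blast
lemma symd_assoc: "symd (symd A B) C = symd A (symd B C)" unfolding symd_def by blast
lemma symd_cancel: "symd (symd A B) B = A" unfolding symd_def by blast
lemma symd_eq_empty: "symd A B = {} \<longleftrightarrow> A = B" unfolding symd_def by blast
lemma finite_symd: "finite A \<Longrightarrow> finite B \<Longrightarrow> finite (symd A B)" unfolding symd_def by auto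
lemma symd_sub: "A \<subseteq> C \<Longrightarrow> B \<subseteq> C \<Longrightarrow> symd A B \<subseteq> C" unfolding symd_def by auto

lemma symd_single_diff: "D \<subseteq> Q \<Longrightarrow> x \<notin> Q \<Longrightarrow> symd D {x} - Q = {x}"
  unfolding symd_def by blast
lemma symd_sub_insert: "D \<subseteq> E \<Longrightarrow> x \<in> E \<Longrightarrow> symd D {x} \<subseteq> E"
  unfolding symd_def by blast
lemma symd_diff_left: "symd Q X - Q = X - Q"
  unfolding symd_def by blast
lemma symd_diff: "symd A B - Q = symd (A - Q) (B - Q)"
  unfolding symd_def by blast

lemma three_minus: "p \<in> Q \<Longrightarrow> q \<notin> Q \<Longrightarrow> r \<notin> Q \<Longrightarrow> {p, q, r} - Q = {q, r}"
  by blast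
lemma symd_single_pair: "q \<noteq> r \<Longrightarrow> symd {q} {q, r} = {r}"
  unfolding symd_def by blast
lemma card_three: "p \<noteq> q \<Longrightarrow> p \<noteq> r \<Longrightarrow> q \<noteq> r \<Longrightarrow> card {p, q, r} = 3"
  by simp

lemma pair_eq_of_mem: "f \<in> {f1, f2} \<Longrightarrow> f' \<in> {f1, f2} \<Longrightarrow> f \<noteq> f' \<Longrightarrow> {f1, f2} = {f, f'}"
  by auto

lemma card_edges_at:
  assumes "\<forall>e\<in>X. card e = 2"
  shows "card {e\<in>X. v \<in> e} = card {u. {v, u} \<in> X}"
proof -
  have inj: "inj_on (\<lambda>u. {v, u}) {u. {v, u} \<in> X}"
    unfolding inj_on_def by (auto simp: doubleton_eq_iff)
  have "{e\<in>X. v \<in> e} \<subseteq> (\<lambda>u. {v, u}) ` {u. {v, u} \<in> X}"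
  proof
    fix e assume e: "e \<in> {e\<in>X. v \<in> e}"
    then have "card e = 2" using assms by auto
    then obtain a b where ab: "e = {a, b}" "a \<noteq> b" by (auto simp: card_2_iff)
    have "v = a \<or> v = b" using e ab by auto
    then obtain u where "e = {v, u}"
    proof
      assume "v = a" then show ?thesis using ab that by blast
    next
      assume "v = b" then have "e = {v, a}" using ab by (simp add: insert_commute)
      then show ?thesis using that by blast
    qed
    then show "e \<in> (\<lambda>u. {v, u}) ` {u. {v, u} \<in> X}" using e by blast
  qed
  moreover have "(\<lambda>u. {v, u}) ` {u. {v, u} \<in> X} \<subseteq> {e\<in>X. v \<in> e}" by blast
  ultimately have "(\<lambda>u. {v, u}) ` {u. {v, u} \<in> X} = {e\<in>X. v \<in> e}" by blast
  then show ?thesis using card_image[OF inj] by simp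
qed

locale NT =
  fixes V :: "'a set" and E F :: "'a set set"
  assumes nt: "near_triangulation V E F"
begin

abbreviation "OE \<equiv> outer_edges E F"
abbreviation "OV \<equiv> outer_vertices E F"

definition fc :: "'a set \<Rightarrow> 'a set set" where "fc e = {f\<in>F. e \<subseteq> f}"
definition bd2 :: "'a set set \<Rightarrow> 'a set set" where
  "bd2 Z = {e\<in>E. odd (card {f\<in>Z. e \<subseteq> f})}"
definition bd1 :: "'a set set \<Rightarrow> 'a set" where
  "bd1 D = {v\<in>V. odd (card {e\<in>D. v \<in> e})}"

lemmas ntu = nt[unfolded near_triangulation_def]
lemma nt1: "simple_graph V E" using ntu by (elim conjE)
lemma nt2: "F \<noteq> {}" using ntu by (elim conjE)
lemma nt3: "\<forall>f\<in>F. f \<subseteq> V \<and> card f = 3" using ntu by (elim conjE)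
lemma nt4: "E = {e. card e = 2 \<and> (\<exists>f\<in>F. e \<subseteq> f)}" using ntu by (elim conjE)
lemma nt5: "V = \<Union> F" using ntu by (elim conjE)
lemma nt6: "\<forall>e\<in>E. card {f\<in>F. e \<subseteq> f} \<le> 2" using ntu by (elim conjE)
lemma nt7: "is_cycle_graph OV OE" using ntu by (elim conjE)
lemma nt8: "\<forall>v\<in>V - OV. is_cycle_graph (link_vertices E v) (link_edges F v)" using ntu by (elim conjE)
lemma nt9: "\<forall>v\<in>OV. is_path_graph (link_vertices E v) (link_edges F v)" using ntu by (elim conjE)
lemma nt10: "graph_connected V E" using ntu by (elim conjE)
lemma nt11: "int (card V) - int (card E) + int (card F) = 1" using ntu by (elim conjE)

lemma finV: "finite V" using nt1 unfolding simple_graph_def by blast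
lemma F3: "f \<in> F \<Longrightarrow> f \<subseteq> V \<and> card f = 3" using nt3 by blast
lemma E_iff: "e \<in> E \<longleftrightarrow> card e = 2 \<and> (\<exists>f\<in>F. e \<subseteq> f)"
  using nt4 by blast
lemma EV: "e \<in> E \<Longrightarrow> e \<subseteq> V \<and> card e = 2" using nt1 unfolding simple_graph_def by blast
lemma finF: "finite F"
proof -
  have "F \<subseteq> Pow V" using F3 by auto
  then show ?thesis using finV by (meson finite_Pow_iff finite_subset)
qed
lemma finE: "finite E"
proof -
  have "E \<subseteq> Pow V" using EV by auto
  then show ?thesis using finV by (meson finite_Pow_iff finite_subset)
qed
lemma V_Union: "V = \<Union> F" using nt5 .
lemma Fne: "F \<noteq> {}" using nt2 .
lemma fc_le2: "e \<in> E \<Longrightarrow> card (fc e) \<le> 2" using nt6 unfolding fc_def by blast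
lemma fc_fin: "finite (fc e)" unfolding fc_def using finF by auto
lemma fc_ne: "e \<in> E \<Longrightarrow> fc e \<noteq> {}" unfolding fc_def using E_iff by auto
lemma OE_iff: "e \<in> OE \<longleftrightarrow> e \<in> E \<and> card (fc e) = 1"
  unfolding outer_edges_def fc_def by auto
lemma OE_E: "e \<in> OE \<Longrightarrow> e \<in> E" using OE_iff by auto
lemma OV_def': "OV = \<Union> OE" unfolding outer_vertices_def by simp
lemma OV_V: "OV \<subseteq> V" using OV_def' OE_E EV by blast
lemma euler: "card E + 1 = card V + card F"
  using nt11 by linarith

lemma cycOV: "is_cycle_graph OV OE" using nt7 .

lemma face3: assumes "f \<in> F" "u \<in> f"
  shows "\<exists>a b. f = {u, a, b} \<and> u \<noteq> a \<and> u \<noteq> b \<and> a \<noteq> b"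
proof -
  from F3[OF assms(1)] obtain x y z where f: "f = {x,y,z}" "x\<noteq>y" "y\<noteq>z" "x\<noteq>z"
    by (auto simp: card_3_iff)
  have "u = x \<or> u = y \<or> u = z" using assms(2) f by auto
  then show ?thesis
  proof (elim disjE)
    assume "u = x" then show ?thesis using f by blast
  next
    assume "u = y" then have "f = {u, x, z}" using f by (simp add: insert_commute)
    then show ?thesis using f \<open>u = y\<close> by blast
  next
    assume "u = z" then have "f = {u, x, y}" using f by (simp add: insert_commute)
    then show ?thesis using f \<open>u = z\<close> by blast
  qed
qed

lemma edge2: assumes "e \<in> E" shows "\<exists>a b. e = {a, b} \<and> a \<noteq> b"
  using EV[OF assms] by (auto simp: card_2_iff)

lemma face_edge: "f \<in> F \<Longrightarrow> a \<in> f \<Longrightarrow> b \<in> f \<Longrightarrow> a \<noteq> b \<Longrightarrow> {a, b} \<in> E"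
  using E_iff by auto

lemma nonouter: assumes "e \<in> E" "e \<notin> OE"
  shows "\<exists>f1 f2. f1 \<noteq> f2 \<and> fc e = {f1, f2}"
proof -
  have "card (fc e) \<noteq> 0" using fc_ne[OF assms(1)] fc_fin by auto
  then have "card (fc e) = 2" using fc_le2[OF assms(1)] assms OE_iff by (metis One_nat_def Suc_1 le_Suc_eq le_zero_eq)
  then obtain f1 f2 where "fc e = {f1, f2}" "f1 \<noteq> f2" by (auto simp: card_2_iff)
  then show ?thesis by blast
qed

lemma outer1: assumes "e \<in> OE" shows "\<exists>f. fc e = {f}"
  using assms OE_iff by (auto simp: card_1_singleton_iff)

lemma OE_ne: "OE \<noteq> {}"
proof -
  have "card OV \<ge> 3" using cycOV unfolding is_cycle_graph_def by auto
  then have "OV \<noteq> {}" by auto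
  then show ?thesis using OV_def' by auto
qed

lemma fc_mem: "f \<in> fc e \<longleftrightarrow> f \<in> F \<and> e \<subseteq> f" unfolding fc_def by auto


lemma link_edges_iff:
  "{p, q} \<in> link_edges F u \<longleftrightarrow> p \<noteq> u \<and> q \<noteq> u \<and> p \<noteq> q \<and> {u, p, q} \<in> F"
proof
  assume "{p, q} \<in> link_edges F u"
  then obtain a b where ab: "{p, q} = {a, b}" "a \<noteq> u" "b \<noteq> u" "a \<noteq> b" "{u, a, b} \<in> F"
    unfolding link_edges_def by blast
  from ab(1) have "(p = a \<and> q = b) \<or> (p = b \<and> q = a)" by (simp add: doubleton_eq_iff)
  then show "p \<noteq> u \<and> q \<noteq> u \<and> p \<noteq> q \<and> {u, p, q} \<in> F"
  proof
    assume "p = a \<and> q = b" then show ?thesis using ab by simp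
  next
    assume h: "p = b \<and> q = a"
    have "{u, b, a} = {u, a, b}" by (simp add: insert_commute)
    then show ?thesis using ab h by simp
  qed
next
  assume "p \<noteq> u \<and> q \<noteq> u \<and> p \<noteq> q \<and> {u, p, q} \<in> F"
  then show "{p, q} \<in> link_edges F u" unfolding link_edges_def by blast
qed

lemma link_conn: assumes "u \<in> V"
  shows "graph_connected (link_vertices E u) (link_edges F u)"
proof (cases "u \<in> OV")
  case True then show ?thesis using nt9 unfolding is_path_graph_def by blast
next
  case False then show ?thesis using nt8 assms unfolding is_cycle_graph_def by blast
qed

lemma bd2_sub: "bd2 Z \<subseteq> E" unfolding bd2_def by blast

lemma edge_same:
  assumes "e \<in> E" "e \<notin> bd2 Z \<or> e \<in> OE" "Z \<subseteq> F" "f \<in> F" "f' \<in> F" "e \<subseteq> f" "e \<subseteq> f'"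
  shows "f \<in> Z \<longleftrightarrow> f' \<in> Z"
proof (cases "f = f'")
  case True then show ?thesis by simp
next
  case False
  have ff: "f \<in> fc e" "f' \<in> fc e" using assms unfolding fc_def by auto
  have "e \<notin> OE"
  proof
    assume "e \<in> OE"
    then obtain g where "fc e = {g}" using outer1 by blast
    then show False using ff False by auto
  qed
  then have nb: "e \<notin> bd2 Z" using assms(2) by blast
  obtain f1 f2 where f12: "f1 \<noteq> f2" "fc e = {f1, f2}" using nonouter[OF assms(1) \<open>e \<notin> OE\<close>] by blast
  have fce: "fc e = {f, f'}" using ff f12 False by auto
  have eq: "{g\<in>Z. e \<subseteq> g} = Z \<inter> {f, f'}" using fce assms(3) unfolding fc_def by blast
  have "\<not> odd (card {g\<in>Z. e \<subseteq> g})" using nb assms(1) unfolding bd2_def by blast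
  then show ?thesis
  proof (cases "f \<in> Z"; cases "f' \<in> Z")
    assume "f \<in> Z" "f' \<notin> Z"
    then have "Z \<inter> {f, f'} = {f}" by auto
    then show ?thesis using eq \<open>\<not> odd _\<close> by simp
  next
    assume "f \<notin> Z" "f' \<in> Z"
    then have "Z \<inter> {f, f'} = {f'}" by auto
    then show ?thesis using eq \<open>\<not> odd _\<close> by simp
  qed auto
qed

lemma link_lemma:
  assumes u: "u \<in> V" and Z: "Z \<subseteq> F"
    and cond: "\<forall>t. {u, t} \<in> E \<longrightarrow> {u, t} \<notin> bd2 Z \<or> {u, t} \<in> OE"
    and f1: "f1 \<in> F" "u \<in> f1" and f2: "f2 \<in> F" "u \<in> f2"
  shows "f1 \<in> Z \<longleftrightarrow> f2 \<in> Z"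
proof -
  obtain a b where ab: "f1 = {u, a, b}" "u \<noteq> a" "u \<noteq> b" "a \<noteq> b" using face3 f1 by blast
  obtain c d where cd: "f2 = {u, c, d}" "u \<noteq> c" "u \<noteq> d" "c \<noteq> d" using face3 f2 by blast
  have "{u, a} \<in> E" using face_edge[OF f1(1)] ab by auto
  then have aL: "a \<in> link_vertices E u" unfolding link_vertices_def by simp
  have "{u, c} \<in> E" using face_edge[OF f2(1)] cd by auto
  then have cL: "c \<in> link_vertices E u" unfolding link_vertices_def by simp
  have path: "(a, c) \<in> (adj_rel (link_vertices E u) (link_edges F u))\<^sup>*"
    using link_conn[OF u] aL cL unfolding graph_connected_def by blast
  define Q where "Q t \<longleftrightarrow> (\<forall>f\<in>F. {u, t} \<subseteq> f \<longrightarrow> (f \<in> Z \<longleftrightarrow> f1 \<in> Z))" for t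
  have Qa: "Q a"
    unfolding Q_def
  proof (intro ballI impI)
    fix f assume "f \<in> F" "{u, a} \<subseteq> f"
    then show "f \<in> Z \<longleftrightarrow> f1 \<in> Z"
      using edge_same[of "{u, a}" Z f f1] \<open>{u, a} \<in> E\<close> cond Z f1 ab by auto
  qed
  have "Q c" using path
  proof (induction rule: rtrancl_induct)
    case base then show ?case using Qa .
  next
    case (step t t')
    then have tt: "{t, t'} \<in> link_edges F u" unfolding adj_rel_def by blast
    then have h: "t \<noteq> u" "t' \<noteq> u" "t \<noteq> t'" "{u, t, t'} \<in> F" using link_edges_iff by blast+
    have hZ: "{u, t, t'} \<in> Z \<longleftrightarrow> f1 \<in> Z" using step.IH h unfolding Q_def by auto
    have et: "{u, t'} \<in> E" using face_edge[OF h(4)] h by auto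
    show ?case unfolding Q_def
    proof (intro ballI impI)
      fix f assume "f \<in> F" "{u, t'} \<subseteq> f"
      then have "f \<in> Z \<longleftrightarrow> {u, t, t'} \<in> Z"
        using edge_same[of "{u, t'}" Z f "{u, t, t'}"] et cond Z h by auto
      then show "f \<in> Z \<longleftrightarrow> f1 \<in> Z" using hZ by simp
    qed
  qed
  then show ?thesis using f2 cd unfolding Q_def by auto
qed

lemma finite_sub_F: "Z \<subseteq> F \<Longrightarrow> finite Z" using finF finite_subset by blast
lemma finite_sub_E: "D \<subseteq> E \<Longrightarrow> finite D" using finE finite_subset by blast

lemma bd2_symd: assumes "A \<subseteq> F" "B \<subseteq> F"
  shows "bd2 (symd A B) = symd (bd2 A) (bd2 B)"
proof -
  have "\<And>e. odd (card {f\<in>symd A B. e \<subseteq> f}) \<longleftrightarrow>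
          (odd (card {f\<in>A. e \<subseteq> f}) \<noteq> odd (card {f\<in>B. e \<subseteq> f}))"
    unfolding symd_filter
    by (rule odd_card_symd) (use assms finite_sub_F in auto)
  then show ?thesis unfolding bd2_def symd_def by auto
qed

lemma bd2_F: "bd2 F = OE"
proof -
  have "\<And>e. e \<in> E \<Longrightarrow> odd (card {f\<in>F. e \<subseteq> f}) \<longleftrightarrow> card (fc e) = 1"
  proof -
    fix e assume e: "e \<in> E"
    have "card (fc e) \<noteq> 0" using fc_ne[OF e] fc_fin by auto
    moreover have "card (fc e) \<le> 2" using fc_le2[OF e] .
    moreover have "{f\<in>F. e \<subseteq> f} = fc e" unfolding fc_def by simp
    ultimately have "card (fc e) = 1 \<or> card (fc e) = 2" by linarith
    then show "odd (card {f\<in>F. e \<subseteq> f}) \<longleftrightarrow> card (fc e) = 1"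
      using \<open>{f\<in>F. e \<subseteq> f} = fc e\<close> by auto
  qed
  then show ?thesis unfolding bd2_def using OE_iff by auto
qed

lemma bd2_empty[simp]: "bd2 {} = {}" unfolding bd2_def by simp

lemma aux3: "p \<in> {a,b,c} \<Longrightarrow> q \<in> {a,b,c} \<Longrightarrow> p \<noteq> q \<Longrightarrow> {p,q} = {a,b} \<or> {p,q} = {a,c} \<or> {p,q} = {b,c}"
  by (auto simp: doubleton_eq_iff)

lemma face_edges: assumes "{a, b, c} \<in> F" "a \<noteq> b" "b \<noteq> c" "a \<noteq> c"
  shows "{e\<in>E. e \<subseteq> {a, b, c}} = {{a, b}, {a, c}, {b, c}}"
proof
  have "{a, b} \<in> E" by (rule face_edge[OF assms(1)]) (simp_all add: assms)
  moreover have "{a, c} \<in> E" by (rule face_edge[OF assms(1)]) (simp_all add: assms)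
  moreover have "{b, c} \<in> E" by (rule face_edge[OF assms(1)]) (simp_all add: assms)
  ultimately show "{{a, b}, {a, c}, {b, c}} \<subseteq> {e\<in>E. e \<subseteq> {a, b, c}}" by simp
next
  show "{e\<in>E. e \<subseteq> {a, b, c}} \<subseteq> {{a, b}, {a, c}, {b, c}}"
  proof
    fix e assume e: "e \<in> {e\<in>E. e \<subseteq> {a, b, c}}"
    then have "e \<in> E" by simp
    then obtain p q where pq: "e = {p, q}" "p \<noteq> q" using edge2 by blast
    have "{p, q} \<subseteq> {a, b, c}" using e pq(1) by simp
    then have "p \<in> {a, b, c}" "q \<in> {a, b, c}" by simp_all
    then have "{p,q} = {a,b} \<or> {p,q} = {a,c} \<or> {p,q} = {b,c}" using aux3 pq(2) by blast
    then show "e \<in> {{a, b}, {a, c}, {b, c}}" unfolding pq(1) by (simp only: insert_iff empty_iff simp_thms)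
  qed
qed

lemma bd2_single: assumes "f \<in> F" shows "bd2 {f} = {e\<in>E. e \<subseteq> f}"
proof -
  have "\<And>e. {g\<in>{f}. e \<subseteq> g} = (if e \<subseteq> f then {f} else {})" by auto
  then show ?thesis unfolding bd2_def by auto
qed

lemma bd1_symd: assumes "finite A" "finite B"
  shows "bd1 (symd A B) = symd (bd1 A) (bd1 B)"
proof -
  have "\<And>v. odd (card {e\<in>symd A B. v \<in> e}) \<longleftrightarrow>
          (odd (card {e\<in>A. v \<in> e}) \<noteq> odd (card {e\<in>B. v \<in> e}))"
    unfolding symd_filter
    by (rule odd_card_symd) (use assms in auto)
  then show ?thesis unfolding bd1_def symd_def by auto
qed

lemma bd1_empty[simp]: "bd1 {} = {}" unfolding bd1_def by simp

lemma bd1_single: assumes "a \<in> V" "b \<in> V" "a \<noteq> b" shows "bd1 {{a, b}} = {a, b}"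
proof -
  have "\<And>v. {e\<in>{{a, b}}. v \<in> e} = (if v \<in> {a, b} then {{a, b}} else {})" by auto
  then show ?thesis unfolding bd1_def using assms by auto
qed

lemma bd1_bd2_single: assumes "f \<in> F" shows "bd1 (bd2 {f}) = {}"
proof -
  obtain a b c where abc: "f = {a, b, c}" "a \<noteq> b" "b \<noteq> c" "a \<noteq> c"
    using F3[OF assms] by (auto simp: card_3_iff)
  have V: "a \<in> V" "b \<in> V" "c \<in> V" using F3[OF assms] abc by auto
  have "bd2 {f} = {{a, b}, {a, c}, {b, c}}" using bd2_single[OF assms] face_edges assms abc by simp
  also have "\<dots> = symd (symd {{a, b}} {{a, c}}) {{b, c}}"
    using abc unfolding symd_def by (auto simp: doubleton_eq_iff)
  finally have "bd1 (bd2 {f}) = symd (symd (bd1 {{a, b}}) (bd1 {{a, c}})) (bd1 {{b, c}})"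
    by (simp add: bd1_symd finite_symd)
  also have "\<dots> = symd (symd {a, b} {a, c}) {b, c}" using bd1_single V abc by simp
  also have "\<dots> = {}" using abc unfolding symd_def by auto
  finally show ?thesis .
qed

lemma bd1_bd2: assumes "Z \<subseteq> F" shows "bd1 (bd2 Z) = {}"
proof -
  have "finite Z" using finite_sub_F assms by blast
  then show ?thesis using assms
  proof (induction Z rule: finite_induct)
    case empty then show ?case by simp
  next
    case (insert f Z)
    have "insert f Z = symd {f} Z" using insert.hyps unfolding symd_def by auto
    have fZ: "{f} \<subseteq> F" "Z \<subseteq> F" using insert.prems by auto
    then have "bd2 (insert f Z) = symd (bd2 {f}) (bd2 Z)" using bd2_symd[OF fZ] \<open>insert f Z = symd {f} Z\<close> by simp
    then have "bd1 (bd2 (insert f Z)) = symd (bd1 (bd2 {f})) (bd1 (bd2 Z))"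
      using bd1_symd finite_sub_E bd2_sub by simp
    then show ?case using bd1_bd2_single insert.IH fZ by simp
  qed
qed

lemma b2: assumes Z: "Z \<subseteq> F" and bZ: "bd2 Z = {}" shows "Z = {}"
proof (rule ccontr)
  assume "Z \<noteq> {}"
  then obtain f0 where f0: "f0 \<in> Z" by blast
  have "card f0 = 3" using F3 f0 Z by auto
  then have "f0 \<noteq> {}" by auto
  then obtain u0 where u0: "u0 \<in> f0" by blast
  have u0V: "u0 \<in> V" using F3 f0 Z u0 by auto
  have cond: "\<forall>t. {u, t} \<in> E \<longrightarrow> {u, t} \<notin> bd2 Z \<or> {u, t} \<in> OE" for u using bZ by simp
  define Q where "Q u \<longleftrightarrow> (\<forall>h\<in>F. u \<in> h \<longrightarrow> h \<in> Z)" for u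
  have Q0: "Q u0" unfolding Q_def
    using link_lemma[OF u0V Z cond] f0 u0 Z by blast
  have allQ: "Q u" if "u \<in> V" for u
  proof -
    have "(u0, u) \<in> (adj_rel V E)\<^sup>*" using nt10 u0V that unfolding graph_connected_def by blast
    then show ?thesis
    proof (induction rule: rtrancl_induct)
      case base then show ?case using Q0 .
    next
      case (step w u)
      then have wu: "{w, u} \<in> E" "u \<in> V" "w \<in> V" unfolding adj_rel_def by auto
      then obtain h where h: "h \<in> F" "{w, u} \<subseteq> h" using E_iff by blast
      then have "h \<in> Z" using step.IH unfolding Q_def by auto
      then show ?case unfolding Q_def using link_lemma[OF wu(2) Z cond] h by blast
    qed
  qed
  have "F \<subseteq> Z"
  proof
    fix f assume f: "f \<in> F"
    then have "card f = 3" using F3 by auto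
    then have "f \<noteq> {}" by auto
    then obtain u where "u \<in> f" by blast
    then show "f \<in> Z" using allQ[of u] F3 f unfolding Q_def by auto
  qed
  then have "Z = F" using Z by blast
  then show False using bZ bd2_F OE_ne by simp
qed

lemma bd2_inj: assumes "A \<subseteq> F" "B \<subseteq> F" "bd2 A = bd2 B" shows "A = B"
proof -
  have "bd2 (symd A B) = {}" using bd2_symd[OF assms(1,2)] assms(3) by simp
  moreover have "symd A B \<subseteq> F" using symd_sub[OF assms(1,2)] .
  ultimately have "symd A B = {}" using b2 by blast
  then show ?thesis by (simp add: symd_eq_empty)
qed

lemma cyc_facts: "\<forall>e\<in>OE. card e = 2" "\<forall>v\<in>OV. card {e\<in>OE. v \<in> e} = 2"
  "graph_connected OV OE"
proof -
  show c2: "\<forall>e\<in>OE. card e = 2" using OE_E EV by blast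
  show "\<forall>v\<in>OV. card {e\<in>OE. v \<in> e} = 2"
    using cycOV card_edges_at[OF c2] unfolding is_cycle_graph_def gdeg_def by simp
  show "graph_connected OV OE" using cycOV unfolding is_cycle_graph_def by blast
qed

lemma evenOE: assumes D: "D \<subseteq> OE" "bd1 D = {}" "D \<noteq> {}" shows "D = OE"
proof -
  have finD: "finite D" using D(1) OE_E finite_sub_E by blast
  have A: "\<forall>e\<in>OE. v \<in> e \<longrightarrow> e \<in> D" if v: "v \<in> OV" "\<exists>e\<in>D. v \<in> e" for v
  proof -
    have sub: "{e\<in>D. v \<in> e} \<subseteq> {e\<in>OE. v \<in> e}" using D by blast
    have "{e\<in>OE. v \<in> e} \<subseteq> E" using OE_E by blast
    then have fin2: "finite {e\<in>OE. v \<in> e}" using finite_sub_E by blast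
    have c2: "card {e\<in>OE. v \<in> e} = 2" using cyc_facts v by blast
    have "v \<in> V" using OV_V v by blast
    then have ev: "even (card {e\<in>D. v \<in> e})" using D(2) unfolding bd1_def by blast
    have "card {e\<in>D. v \<in> e} \<noteq> 0" using v finD by auto
    moreover have "card {e\<in>D. v \<in> e} \<le> 2" using card_mono[OF fin2 sub] c2 by simp
    ultimately have "card {e\<in>D. v \<in> e} = 1 \<or> card {e\<in>D. v \<in> e} = 2" by linarith
    then have "card {e\<in>D. v \<in> e} = 2" using ev by auto
    then have "{e\<in>D. v \<in> e} = {e\<in>OE. v \<in> e}" using card_subset_eq[OF fin2 sub] c2 by simp
    then show ?thesis by blast
  qed
  obtain e0 where e0: "e0 \<in> D" using D by blast
  then have "e0 \<in> OE" using D by blast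
  then obtain a b where ab: "e0 = {a, b}" using edge2 OE_E by blast
  have aOV: "a \<in> OV" using \<open>e0 \<in> OE\<close> ab OV_def' by blast
  have Qall: "\<forall>e\<in>OE. v \<in> e \<longrightarrow> e \<in> D" if "v \<in> OV" for v
  proof -
    have "(a, v) \<in> (adj_rel OV OE)\<^sup>*" using cyc_facts(3) aOV that unfolding graph_connected_def by blast
    then show ?thesis
    proof (induction rule: rtrancl_induct)
      case base then show ?case using A[OF aOV] e0 ab by blast
    next
      case (step w u)
      then have "{w, u} \<in> OE" "u \<in> OV" unfolding adj_rel_def by auto
      then have "{w, u} \<in> D" using step.IH by blast
      then show ?case using A[OF \<open>u \<in> OV\<close>] by blast
    qed
  qed
  show ?thesis
  proof
    show "OE \<subseteq> D"
    proof
      fix e assume e: "e \<in> OE"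
      then obtain p q where "e = {p, q}" using edge2 OE_E by blast
      then have "p \<in> OV" "p \<in> e" using e OV_def' by auto
      then show "e \<in> D" using Qall e by blast
    qed
  qed (use D in blast)
qed

lemma clopen: assumes "I \<subseteq> F" "bd2 I \<subseteq> OE" shows "I = {} \<or> I = F"
proof (cases "bd2 I = {}")
  case True then show ?thesis using b2 assms by blast
next
  case False
  then have "bd2 I = OE" using evenOE assms bd1_bd2 by blast
  then have "bd2 (symd F I) = {}" using bd2_symd[of F I] assms bd2_F by simp
  moreover have "symd F I \<subseteq> F" using symd_sub[of F F I] assms by blast
  ultimately have "symd F I = {}" using b2 by blast
  then show ?thesis by (simp add: symd_eq_empty)
qed


lemma path_bd1:
  assumes W: "W \<subseteq> V" and X: "X \<subseteq> E" and pq: "(p, q) \<in> (adj_rel W X)\<^sup>*"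
  shows "\<exists>D\<subseteq>X. bd1 D = symd {p} {q}"
  using pq
proof (induction rule: rtrancl_induct)
  case base
  have "bd1 {} = symd {p} {p}" by simp
  then show ?case by blast
next
  case (step w u)
  obtain D where D: "D \<subseteq> X" "bd1 D = symd {p} {w}" using step.IH by blast
  have wu: "{w, u} \<in> X" "w \<in> W" "u \<in> W" using step.hyps(2) unfolding adj_rel_def by auto
  then have "card {w, u} = 2" using X EV by blast
  then have ne: "w \<noteq> u" by auto
  have finD: "finite D" using D(1) X finite_sub_E by blast
  have "bd1 (symd D {{w, u}}) = symd (bd1 D) (bd1 {{w, u}})"
    using bd1_symd finD by simp
  also have "\<dots> = symd (symd {p} {w}) {w, u}"
  proof -
    have "w \<in> V" "u \<in> V" using wu W by auto
    then have "bd1 {{w, u}} = {w, u}" using bd1_single ne by blast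
    then show ?thesis using D(2) by simp
  qed
  also have "\<dots> = symd {p} {u}" using ne unfolding symd_def by auto
  finally have "bd1 (symd D {{w, u}}) = symd {p} {u}" .
  moreover have "symd D {{w, u}} \<subseteq> X" using D(1) wu unfolding symd_def by auto
  ultimately show ?case by blast
qed

lemma bd1_sub: "bd1 D \<subseteq> V" unfolding bd1_def by blast

lemma im1_aux:
  assumes v0: "v0 \<in> V" and U: "finite U" "U \<subseteq> V - {v0}"
  shows "\<exists>D\<subseteq>E. bd1 D = U \<or> bd1 D = insert v0 U"
  using U
proof (induction U rule: finite_induct)
  case empty
  have "bd1 {} = {}" by simp
  then show ?case by blast
next
  case (insert u U)
  then obtain D where D: "D \<subseteq> E" "bd1 D = U \<or> bd1 D = insert v0 U" by blast
  have u: "u \<in> V" "u \<noteq> v0" "v0 \<notin> U" using insert.prems by auto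
  have "(v0, u) \<in> (adj_rel V E)\<^sup>*" using nt10 v0 u unfolding graph_connected_def by blast
  then obtain Du where Du: "Du \<subseteq> E" "bd1 Du = symd {v0} {u}" using path_bd1[of V E v0 u] by blast
  have s2: "symd {v0} {u} = {v0, u}" using u unfolding symd_def by auto
  have fin: "finite D" "finite Du" using D Du finite_sub_E by auto
  have eq: "bd1 (symd D Du) = symd (bd1 D) (symd {v0} {u})" using bd1_symd fin Du by simp
  have sub: "symd D Du \<subseteq> E" using D Du symd_sub by blast
  from D(2) show ?case
  proof
    assume "bd1 D = U"
    then have "bd1 (symd D Du) = symd U {v0, u}" using eq s2 by simp
    also have "\<dots> = insert v0 (insert u U)" using u insert.hyps(2) unfolding symd_def by blast
    finally have "bd1 (symd D Du) = insert v0 (insert u U)" .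
    then show ?thesis using sub by blast
  next
    assume "bd1 D = insert v0 U"
    then have "bd1 (symd D Du) = symd (insert v0 U) {v0, u}" using eq s2 by simp
    also have "\<dots> = insert u U" using u insert.hyps(2) unfolding symd_def by blast
    finally have "bd1 (symd D Du) = insert u U" .
    then show ?thesis using sub by blast
  qed
qed

lemma card_im1: "2 ^ (card V - 1) \<le> card (bd1 ` Pow E)"
proof -
  obtain f where f: "f \<in> F" using Fne by blast
  then have "card f = 3" "f \<subseteq> V" using F3 by auto
  then have "f \<noteq> {}" by auto
  then obtain v0 where "v0 \<in> f" by blast
  then have v0: "v0 \<in> V" using \<open>f \<subseteq> V\<close> by blast
  have finI: "finite (bd1 ` Pow E)" using finE by simp
  have "Pow (V - {v0}) \<subseteq> (\<lambda>T. T - {v0}) ` (bd1 ` Pow E)"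
  proof
    fix U assume U: "U \<in> Pow (V - {v0})"
    then have UV: "U \<subseteq> V - {v0}" by simp
    then have "finite U" using finV finite_subset by (metis Diff_subset subset_trans)
    then obtain D where D: "D \<subseteq> E" "bd1 D = U \<or> bd1 D = insert v0 U" using im1_aux[OF v0 _ UV] by blast
    have "v0 \<notin> U" using UV by blast
    then have "bd1 D - {v0} = U" using D(2) by blast
    moreover have "bd1 D \<in> bd1 ` Pow E" using D(1) by blast
    ultimately show "U \<in> (\<lambda>T. T - {v0}) ` (bd1 ` Pow E)" by (metis image_eqI)
  qed
  moreover have "finite ((\<lambda>T. T - {v0}) ` (bd1 ` Pow E))" using finI by blast
  ultimately have "card (Pow (V - {v0})) \<le> card ((\<lambda>T. T - {v0}) ` (bd1 ` Pow E))"
    by (rule card_mono[rotated])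
  also have "\<dots> \<le> card (bd1 ` Pow E)" using finI card_image_le by blast
  finally have "card (Pow (V - {v0})) \<le> card (bd1 ` Pow E)" .
  moreover have "card (Pow (V - {v0})) = 2 ^ (card V - 1)"
    using v0 finV by (simp add: card_Pow)
  ultimately show ?thesis by simp
qed

definition K1 where "K1 = {D. D \<subseteq> E \<and> bd1 D = {}}"

lemma card_K1_I1: "card K1 * card (bd1 ` Pow E) \<le> 2 ^ card E"
proof -
  define s where "s y = (SOME D. D \<in> Pow E \<and> bd1 D = y)" for y
  have s: "s y \<in> Pow E \<and> bd1 (s y) = y" if "y \<in> bd1 ` Pow E" for y
    unfolding s_def by (rule someI_ex) (use that in blast)
  define phi where "phi = (\<lambda>(k, y). symd k (s y))"
  have inj: "inj_on phi (K1 \<times> bd1 ` Pow E)"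
  proof (rule inj_onI)
    fix x1 x2 assume x1: "x1 \<in> K1 \<times> bd1 ` Pow E" and x2: "x2 \<in> K1 \<times> bd1 ` Pow E"
      and eq: "phi x1 = phi x2"
    obtain k1 y1 where 1: "x1 = (k1, y1)" "k1 \<in> K1" "y1 \<in> bd1 ` Pow E" using x1 by blast
    obtain k2 y2 where 2: "x2 = (k2, y2)" "k2 \<in> K1" "y2 \<in> bd1 ` Pow E" using x2 by blast
    have e: "symd k1 (s y1) = symd k2 (s y2)" using eq 1 2 unfolding phi_def by simp
    have f1: "finite k1" "finite (s y1)" using 1 s[of y1] finite_sub_E unfolding K1_def by auto
    have f2: "finite k2" "finite (s y2)" using 2 s[of y2] finite_sub_E unfolding K1_def by auto
    have "bd1 (symd k1 (s y1)) = y1" using bd1_symd[OF f1] 1 s[of y1] unfolding K1_def by simp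
    moreover have "bd1 (symd k2 (s y2)) = y2" using bd1_symd[OF f2] 2 s[of y2] unfolding K1_def by simp
    ultimately have "y1 = y2" using e by simp
    then have "k1 = k2" using e by (metis symd_cancel)
    then show "x1 = x2" using 1 2 \<open>y1 = y2\<close> by simp
  qed
  have "phi ` (K1 \<times> bd1 ` Pow E) \<subseteq> Pow E"
  proof
    fix z assume "z \<in> phi ` (K1 \<times> bd1 ` Pow E)"
    then obtain k y where "z = symd k (s y)" "k \<in> K1" "y \<in> bd1 ` Pow E" unfolding phi_def by auto
    then show "z \<in> Pow E" using s[of y] symd_sub[of k E "s y"] unfolding K1_def by auto
  qed
  then have "card (phi ` (K1 \<times> bd1 ` Pow E)) \<le> card (Pow E)"
    using finE by (intro card_mono) auto
  then have "card (K1 \<times> bd1 ` Pow E) \<le> 2 ^ card E"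
    using card_image[OF inj] finE by (simp add: card_Pow)
  then show ?thesis by (simp add: card_cartesian_product)
qed

lemma b1: assumes "D \<subseteq> E" "bd1 D = {}" shows "\<exists>Z\<subseteq>F. bd2 Z = D"
proof -
  have I2: "card (bd2 ` Pow F) = 2 ^ card F"
  proof -
    have "inj_on bd2 (Pow F)" using bd2_inj by (intro inj_onI) auto
    then have "card (bd2 ` Pow F) = card (Pow F)" by (rule card_image)
    then show ?thesis using finF by (simp add: card_Pow)
  qed
  have sub: "bd2 ` Pow F \<subseteq> K1" unfolding K1_def using bd1_bd2 bd2_sub by auto
  have finK: "finite K1" unfolding K1_def using finE by simp
  have Vpos: "card V \<ge> 1"
  proof -
    obtain f where "f \<in> F" using Fne by blast
    then have "card f = 3" "f \<subseteq> V" using F3 by auto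
    then have "V \<noteq> {}" by auto
    then show ?thesis using finV by (simp add: Suc_leI card_gt_0_iff)
  qed
  have cE: "card E = card F + (card V - 1)" using euler Vpos by linarith
  have "card K1 * 2 ^ (card V - 1) \<le> card K1 * card (bd1 ` Pow E)"
    using card_im1 by simp
  also have "\<dots> \<le> 2 ^ card E" using card_K1_I1 .
  also have "\<dots> = 2 ^ card F * 2 ^ (card V - 1)" using cE by (simp add: power_add)
  finally have "card K1 \<le> 2 ^ card F" by simp
  then have "bd2 ` Pow F = K1" using card_subset_eq[OF finK sub] card_mono[OF finK sub] I2 by linarith
  then have "D \<in> bd2 ` Pow F" using assms unfolding K1_def by blast
  then show ?thesis by blast
qed


lemma bd2_iff2:
  assumes I: "I \<subseteq> F" and fc: "fc e = {f1, f2}" "f1 \<noteq> f2" and e: "e \<in> E"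
  shows "e \<in> bd2 I \<longleftrightarrow> ((f1 \<in> I) \<noteq> (f2 \<in> I))"
proof -
  have eq: "{f\<in>I. e \<subseteq> f} = I \<inter> {f1, f2}" using fc I unfolding fc_def by blast
  have bd: "e \<in> bd2 I \<longleftrightarrow> odd (card (I \<inter> {f1, f2}))" using e eq unfolding bd2_def by simp
  show ?thesis
  proof (cases "f1 \<in> I"; cases "f2 \<in> I")
    assume "f1 \<in> I" "f2 \<in> I"
    then have "I \<inter> {f1, f2} = {f1, f2}" by blast
    then show ?thesis using bd fc(2) \<open>f1 \<in> I\<close> \<open>f2 \<in> I\<close> by simp
  next
    assume "f1 \<in> I" "f2 \<notin> I"
    then have "I \<inter> {f1, f2} = {f1}" by blast
    then show ?thesis using bd \<open>f1 \<in> I\<close> \<open>f2 \<notin> I\<close> by simp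
  next
    assume "f1 \<notin> I" "f2 \<in> I"
    then have "I \<inter> {f1, f2} = {f2}" by blast
    then show ?thesis using bd \<open>f1 \<notin> I\<close> \<open>f2 \<in> I\<close> by simp
  next
    assume "f1 \<notin> I" "f2 \<notin> I"
    then have "I \<inter> {f1, f2} = {}" by blast
    then show ?thesis using bd \<open>f1 \<notin> I\<close> \<open>f2 \<notin> I\<close> by simp
  qed
qed

lemma bd2_inner_split:
  assumes I: "I \<subseteq> F" and e: "e \<in> bd2 I" "e \<notin> OE"
  shows "\<exists>h1 h2. fc e = {h1, h2} \<and> h1 \<noteq> h2 \<and> h1 \<in> I \<and> h2 \<notin> I"
proof -
  have eE: "e \<in> E" using e bd2_sub by blast
  obtain f1 f2 where f: "f1 \<noteq> f2" "fc e = {f1, f2}" using nonouter[OF eE e(2)] by blast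
  have "(f1 \<in> I) \<noteq> (f2 \<in> I)" using bd2_iff2[OF I f(2) f(1) eE] e by blast
  then show ?thesis
  proof (cases "f1 \<in> I")
    case True then show ?thesis using f \<open>(f1 \<in> I) \<noteq> (f2 \<in> I)\<close> by blast
  next
    case False
    then have "fc e = {f2, f1}" using f by (simp add: insert_commute)
    then show ?thesis using f False \<open>(f1 \<in> I) \<noteq> (f2 \<in> I)\<close> by blast
  qed
qed

lemma other_edge:
  assumes K: "K \<subseteq> F" and xy: "{x, y} \<in> bd2 K"
  shows "\<exists>z. {x, z} \<in> bd2 K \<and> z \<noteq> y \<and> z \<noteq> x"
proof -
  define Sx where "Sx = {e\<in>bd2 K. x \<in> e}"
  have "{x, y} \<in> E" using xy bd2_sub by blast
  then have xV: "x \<in> V" using EV by blast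
  have ev: "even (card Sx)" using bd1_bd2[OF K] xV unfolding bd1_def Sx_def by blast
  have fin: "finite Sx" unfolding Sx_def using finite_sub_E[OF bd2_sub] by simp
  have in1: "{x, y} \<in> Sx" unfolding Sx_def using xy by simp
  have "\<not> Sx \<subseteq> {{x, y}}"
  proof
    assume "Sx \<subseteq> {{x, y}}"
    then have "Sx = {{x, y}}" using in1 by blast
    then show False using ev by simp
  qed
  then obtain e where e: "e \<in> Sx" "e \<noteq> {x, y}" by blast
  then have eE: "e \<in> E" "x \<in> e" unfolding Sx_def using bd2_sub by auto
  obtain p q where pq: "e = {p, q}" "p \<noteq> q" using edge2[OF eE(1)] by blast
  have "\<exists>z. e = {x, z}"
  proof (cases "x = p")
    case True then show ?thesis using pq by blast
  next
    case False then have "x = q" using eE pq by blast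
    then have "e = {x, p}" using pq by (simp add: insert_commute)
    then show ?thesis by blast
  qed
  then obtain z where z: "e = {x, z}" by blast
  have "z \<noteq> x" using z pq by auto
  moreover have "z \<noteq> y" using z e(2) by blast
  moreover have "{x, z} \<in> bd2 K" using e z unfolding Sx_def by simp
  ultimately show ?thesis by blast
qed

lemma flip_side: assumes "W \<subseteq> F" shows "bd2 (F - W) - OE = bd2 W - OE"
proof -
  have "F - W = symd F W" using assms unfolding symd_def by blast
  then have "bd2 (F - W) = symd OE (bd2 W)" using bd2_symd[of F W] assms bd2_F by simp
  then show ?thesis by (simp add: symd_diff_left)
qed

lemma OE_OV: assumes "{x, a} \<in> OE" shows "x \<in> OV" "a \<in> OV"
  using assms OV_def' by auto

lemma chord_side:
  assumes a: "a \<in> OV" and z: "z \<in> OV" and az: "{a, z} \<in> E" "{a, z} \<notin> OE"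
  shows "\<exists>W\<subseteq>F. bd2 W - OE = {{a, z}}"
proof -
  have ne: "a \<noteq> z" using EV[OF az(1)] by auto
  have p: "(a, z) \<in> (adj_rel OV OE)\<^sup>*" using cyc_facts(3) a z unfolding graph_connected_def by blast
  have "OE \<subseteq> E" using OE_E by blast
  from path_bd1[OF OV_V this p] obtain D where D: "D \<subseteq> OE" "bd1 D = symd {a} {z}" by blast
  have finD: "finite D" using D(1) OE_E finite_sub_E by blast
  have aV: "a \<in> V" "z \<in> V" using a z OV_V by auto
  have "bd1 (symd D {{a, z}}) = symd (bd1 D) (bd1 {{a, z}})" using bd1_symd finD by simp
  also have "\<dots> = symd (symd {a} {z}) {a, z}" using D(2) bd1_single[OF aV ne] by simp
  also have "\<dots> = {}" using ne unfolding symd_def by auto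
  finally have b0: "bd1 (symd D {{a, z}}) = {}" .
  have "D \<subseteq> E" using D(1) OE_E by blast
  then have sub: "symd D {{a, z}} \<subseteq> E" using az(1) by (rule symd_sub_insert)
  obtain W where W: "W \<subseteq> F" "bd2 W = symd D {{a, z}}" using b1[OF sub b0] by blast
  have "symd D {{a, z}} - OE = {{a, z}}" using D(1) az(2) by (rule symd_single_diff)
  then have "bd2 W - OE = {{a, z}}" using W(2) by simp
  then show ?thesis using W(1) by blast
qed

end

locale NT2 = NT +
  assumes no_ear: "\<not> (\<exists>v\<in>V - OV. \<exists>u w. {u, w} \<in> OE \<and> {v, u, w} \<in> F)"
begin

lemma outer_apex:
  assumes xa: "{x, a} \<in> OE" and g: "g \<in> F" "{x, a} \<subseteq> g"
  shows "\<exists>z. g = {x, a, z} \<and> z \<noteq> x \<and> z \<noteq> a \<and> z \<in> OV"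
proof -
  have xa_ne: "x \<noteq> a" using EV[OF OE_E[OF xa]] by auto
  obtain p q where pq: "g = {x, p, q}" "x \<noteq> p" "x \<noteq> q" "p \<noteq> q" using face3[OF g(1)] g(2) by blast
  have "a = p \<or> a = q" using g(2) pq xa_ne by auto
  then obtain z where z: "g = {x, a, z}" "z \<noteq> x" "z \<noteq> a"
  proof
    assume "a = p" then show ?thesis using pq that by blast
  next
    assume "a = q" then have "g = {x, a, p}" using pq by (simp add: insert_commute)
    then show ?thesis using pq that \<open>a = q\<close> by blast
  qed
  have "z \<in> V" using F3[OF g(1)] z by auto
  moreover have "{z, x, a} \<in> F" using g(1) z by (simp add: insert_commute)
  ultimately have "z \<in> OV" using no_ear xa by blast
  then show ?thesis using z by blast
qed

lemma outer_face_notR: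
  assumes xa: "{x, a} \<in> OE" and g: "g \<in> F" "{x, a} \<subseteq> g"
  shows "\<forall>v\<in>g. v \<in> OV"
proof -
  obtain z where "g = {x, a, z}" "z \<in> OV" using outer_apex[OF assms] by blast
  then show ?thesis using OE_OV[OF xa] by auto
qed

lemma ear_recog:
  assumes ax: "{a, x} \<in> OE" and ay: "{a, y} \<in> OE" and xy: "x \<noteq> y" and g: "{a, x, y} \<in> F"
  shows "gdeg E a = 2 \<and> (\<forall>h\<in>F. a \<in> h \<longrightarrow> h = {a, x, y})"
proof -
  have aV: "a \<in> V" using OE_OV[OF ax] OV_V by blast
  have ax_ne: "a \<noteq> x" using EV[OF OE_E[OF ax]] by auto
  have ay_ne: "a \<noteq> y" using EV[OF OE_E[OF ay]] by auto
  define LV where "LV = link_vertices E a"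
  define LE where "LE = link_edges F a"
  have uniq: "b = c" if o: "{a, p} \<in> OE" "{a, p, b} \<in> F" "{a, p, c} \<in> F" "b \<noteq> a" "b \<noteq> p"
    "c \<noteq> a" "c \<noteq> p" for p b c
  proof -
    obtain f0 where f0: "fc {a, p} = {f0}" using outer1[OF o(1)] by blast
    have "{a, p, b} \<in> fc {a, p}" "{a, p, c} \<in> fc {a, p}" using o unfolding fc_def by auto
    then have "{a, p, b} = f0" "{a, p, c} = f0" using f0 by simp_all
    then have eq: "{a, p, b} = {a, p, c}" by simp
    have "b \<in> {a, p, b}" by simp
    then have "b \<in> {a, p, c}" by (simp only: eq)
    then show "b = c" using o by simp
  qed
  have Nx: "t = y" if "{x, t} \<in> LE" for t
  proof -
    have h: "x \<noteq> a" "t \<noteq> a" "x \<noteq> t" "{a, x, t} \<in> F" using that link_edges_iff unfolding LE_def by blast+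
    show ?thesis by (rule uniq[OF ax h(4) g]) (use h xy ay_ne in auto)
  qed
  have Ny: "t = x" if "{y, t} \<in> LE" for t
  proof -
    have h: "y \<noteq> a" "t \<noteq> a" "y \<noteq> t" "{a, y, t} \<in> F" using that link_edges_iff unfolding LE_def by blast+
    have g': "{a, y, x} \<in> F" using g by (simp add: insert_commute)
    show ?thesis by (rule uniq[OF ay h(4) g']) (use h xy ax_ne in auto)
  qed
  have xL: "x \<in> LV" "y \<in> LV" using face_edge[OF g] ax_ne ay_ne unfolding LV_def link_vertices_def by auto
  have LVsub: "LV \<subseteq> {x, y}"
  proof
    fix t assume t: "t \<in> LV"
    have "(x, t) \<in> (adj_rel LV LE)\<^sup>*" using link_conn[OF aV] xL t unfolding LV_def LE_def graph_connected_def by blast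
    then show "t \<in> {x, y}"
    proof (induction rule: rtrancl_induct)
      case base then show ?case by simp
    next
      case (step w t)
      then have "{w, t} \<in> LE" unfolding adj_rel_def by blast
      moreover have "w = x \<or> w = y" using step.IH by blast
      ultimately show ?case using Nx Ny by blast
    qed
  qed
  have LVeq: "LV = {x, y}" using LVsub xL by blast
  have "gdeg E a = card LV" unfolding gdeg_def LV_def link_vertices_def by simp
  then have d2: "gdeg E a = 2" using LVeq xy by simp
  have "h = {a, x, y}" if h: "h \<in> F" "a \<in> h" for h
  proof -
    obtain p q where pq: "h = {a, p, q}" "a \<noteq> p" "a \<noteq> q" "p \<noteq> q" using face3[OF h] by blast
    have "p \<in> LV" "q \<in> LV" using face_edge[OF h(1)] pq unfolding LV_def link_vertices_def by auto
    then have "p \<in> {x, y}" "q \<in> {x, y}" using LVeq by auto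
    then have "{p, q} = {x, y}" using pq(4) by auto
    then show ?thesis using pq(1) by simp
  qed
  then show ?thesis using d2 by blast
qed

definition earsIn :: "'a set set \<Rightarrow> 'a set" where
  "earsIn Z = {w\<in>OV. gdeg E w = 2 \<and> (\<forall>g\<in>F. w \<in> g \<longrightarrow> g \<in> Z)}"

lemma earsIn_mono: "Z \<subseteq> Z' \<Longrightarrow> earsIn Z \<subseteq> earsIn Z'" unfolding earsIn_def by blast

lemma earsIn_disj: assumes "Z1 \<inter> Z2 = {}" shows "earsIn Z1 \<inter> earsIn Z2 = {}"
proof (rule ccontr)
  assume "earsIn Z1 \<inter> earsIn Z2 \<noteq> {}"
  then obtain w where w: "w \<in> earsIn Z1" "w \<in> earsIn Z2" by blast
  then have "w \<in> V" using OV_V unfolding earsIn_def by blast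
  then obtain g where "g \<in> F" "w \<in> g" using V_Union by blast
  then show False using w assms unfolding earsIn_def by blast
qed


lemma ear_lemma_aux:
  "\<forall>Z x y. card Z = n \<longrightarrow> Z \<subseteq> F \<longrightarrow> {x, y} \<in> E \<longrightarrow> {x, y} \<notin> OE \<longrightarrow>
     bd2 Z - OE = {{x, y}} \<longrightarrow> earsIn Z \<noteq> {}"
proof (induction n rule: less_induct)
  case (less n)
  have IH: "\<And>Z' a b. card Z' < n \<Longrightarrow> Z' \<subseteq> F \<Longrightarrow> {a, b} \<in> E \<Longrightarrow> {a, b} \<notin> OE \<Longrightarrow>
              bd2 Z' - OE = {{a, b}} \<Longrightarrow> earsIn Z' \<noteq> {}"
    using less.IH by blast
  show ?case
  proof (intro allI impI)
    fix Z x y assume cZ: "card Z = n" and Z: "Z \<subseteq> F" and xyE: "{x, y} \<in> E"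
      and xyO: "{x, y} \<notin> OE" and bZ: "bd2 Z - OE = {{x, y}}"
    have finZ: "finite Z" using finite_sub_F[OF Z] .
    have xy_ne: "x \<noteq> y" using EV[OF xyE] by auto
    have xyb: "{x, y} \<in> bd2 Z" using bZ by blast
    have inner_is_xy: "e = {x, y}" if "e \<in> bd2 Z" "e \<notin> OE" for e
    proof -
      have "e \<in> bd2 Z - OE" using that by blast
      then show ?thesis unfolding bZ by simp
    qed
    obtain a where a: "{x, a} \<in> bd2 Z" "a \<noteq> y" "a \<noteq> x" using other_edge[OF Z xyb] by blast
    have aO: "{x, a} \<in> OE"
    proof (rule ccontr)
      assume "{x, a} \<notin> OE"
      then have "{x, a} = {x, y}" using inner_is_xy a(1) by blast
      then show False using a by (simp add: doubleton_eq_iff)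
    qed
    obtain g where g: "fc {x, a} = {g}" using outer1[OF aO] by blast
    have gF: "g \<in> F" "{x, a} \<subseteq> g" using g unfolding fc_def by auto
    have gZ: "g \<in> Z"
    proof -
      have "odd (card {f\<in>Z. {x, a} \<subseteq> f})" using a(1) unfolding bd2_def by blast
      then have "{f\<in>Z. {x, a} \<subseteq> f} \<noteq> {}" by (metis card.empty even_zero)
      then obtain f where f: "f \<in> Z" "{x, a} \<subseteq> f" by blast
      then have "f \<in> fc {x, a}" using Z unfolding fc_def by blast
      then show ?thesis using g f by simp
    qed
    obtain z where z: "g = {x, a, z}" "z \<noteq> x" "z \<noteq> a" "z \<in> OV" using outer_apex[OF aO gF] by blast
    have gdef: "{x, a, z} \<in> F" using gF z by simp
    have aOV: "a \<in> OV" "x \<in> OV" using OE_OV[OF aO] by auto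
    have ax: "{a, x} \<in> OE" using aO by (simp add: insert_commute)
    have a_in: "a \<in> earsIn Z" if "{a, x} \<in> OE" "{a, t} \<in> OE" "x \<noteq> t" "{a, x, t} = g" for t
    proof -
      have "{a, x, t} \<in> F" using that(4) gF by simp
      from ear_recog[OF that(1,2,3) this] have "gdeg E a = 2" "\<forall>h\<in>F. a \<in> h \<longrightarrow> h = {a, x, t}"
        by blast+
      then show ?thesis unfolding earsIn_def using aOV gZ that(4) by auto
    qed
    show "earsIn Z \<noteq> {}"
    proof (cases "z = y")
      case zy: True
      show ?thesis
      proof (cases "{a, y} \<in> OE")
        case True
        have "{a, x, y} = g" using z zy by (simp add: insert_commute)
        then show ?thesis using a_in[OF ax True xy_ne] by blast
      next
        case False
        define Z' where "Z' = Z - {g}"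
        have Z'sym: "Z' = symd Z {g}" using gZ unfolding Z'_def symd_def by blast
        have Z'F: "Z' \<subseteq> F" using Z unfolding Z'_def by blast
        have bg: "bd2 {g} = {{x, a}, {x, y}, {a, y}}"
          using bd2_single[OF gF(1)] face_edges[OF gdef] z zy a by simp
        have "bd2 Z' = symd (bd2 Z) (bd2 {g})" using bd2_symd[of Z "{g}"] Z gF Z'sym by simp
        then have "bd2 Z' - OE = symd (bd2 Z - OE) (bd2 {g} - OE)" by (simp add: symd_diff)
        moreover have "bd2 {g} - OE = {{x, y}, {a, y}}" unfolding bg using aO xyO False by (rule three_minus)
        moreover have "{x, y} \<noteq> {a, y}" using a xy_ne by (simp add: doubleton_eq_iff)
        then have "symd {{x, y}} {{x, y}, {a, y}} = {{a, y}}" by (rule symd_single_pair)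
        ultimately have bZ': "bd2 Z' - OE = {{a, y}}" using bZ by simp
        have "card Z' < card Z" unfolding Z'_def using card_Diff1_less[OF finZ gZ] .
        moreover have "{a, y} \<in> E" using face_edge[OF gdef] z zy a by auto
        ultimately have "earsIn Z' \<noteq> {}" using IH[OF _ Z'F _ False bZ'] cZ by blast
        moreover have "earsIn Z' \<subseteq> earsIn Z" using earsIn_mono Z'_def by blast
        ultimately show ?thesis by blast
      qed
    next
      case zy: False
      have xzE: "{x, z} \<in> E" using face_edge[OF gdef] z by auto
      have xzO: "{x, z} \<notin> OE"
      proof
        assume xzO: "{x, z} \<in> OE"
        define Sx where "Sx = {e\<in>bd2 Z. x \<in> e}"
        have xV: "x \<in> V" using aOV OV_V by blast
        have ev: "even (card Sx)" using bd1_bd2[OF Z] xV unfolding bd1_def Sx_def by blast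
        define Ox where "Ox = {e\<in>OE. x \<in> e}"
        have cOx: "card Ox = 2" using cyc_facts(2) aOV unfolding Ox_def by blast
        have "Ox \<subseteq> E" unfolding Ox_def using OE_E by blast
        then have finOx: "finite Ox" using finite_sub_E by blast
        have ne_az: "{x, a} \<noteq> {x, z}" using z by (simp add: doubleton_eq_iff)
        have sub2: "{{x, a}, {x, z}} \<subseteq> Ox" unfolding Ox_def using aO xzO by simp
        have "card {{x, a}, {x, z}} = 2" using ne_az by simp
        then have Oxeq: "Ox = {{x, a}, {x, z}}" using card_subset_eq[OF finOx sub2] cOx by simp
        have xzb: "{x, z} \<in> bd2 Z"
        proof -
          obtain g' where g': "fc {x, z} = {g'}" using outer1[OF xzO] by blast
          have "g \<in> fc {x, z}" using gF z unfolding fc_def by auto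
          then have gg: "g' = g" using g' by simp
          have "{f\<in>Z. {x, z} \<subseteq> f} = {g}"
          proof
            show "{f\<in>Z. {x, z} \<subseteq> f} \<subseteq> {g}"
            proof
              fix f assume "f \<in> {f\<in>Z. {x, z} \<subseteq> f}"
              then have "f \<in> fc {x, z}" using Z unfolding fc_def by blast
              then show "f \<in> {g}" using g' gg by simp
            qed
            show "{g} \<subseteq> {f\<in>Z. {x, z} \<subseteq> f}" using gZ z by auto
          qed
          then show ?thesis using xzE unfolding bd2_def by simp
        qed
        have "Sx = {{x, y}, {x, a}, {x, z}}"
        proof
          show "Sx \<subseteq> {{x, y}, {x, a}, {x, z}}"
          proof
            fix e assume e: "e \<in> Sx"
            show "e \<in> {{x, y}, {x, a}, {x, z}}"
            proof (cases "e \<in> OE")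
              case True
              then have "e \<in> Ox" using e unfolding Sx_def Ox_def by blast
              then show ?thesis using Oxeq by simp
            next
              case False
              then have "e = {x, y}" using inner_is_xy e unfolding Sx_def by blast
              then show ?thesis by simp
            qed
          qed
          show "{{x, y}, {x, a}, {x, z}} \<subseteq> Sx" unfolding Sx_def using xyb a(1) xzb by simp
        qed
        moreover have "card {{x, y}, {x, a}, {x, z}} = 3"
        proof (rule card_three)
          show "{x, y} \<noteq> {x, a}" using a by (simp add: doubleton_eq_iff)
          show "{x, y} \<noteq> {x, z}" using zy z by (simp add: doubleton_eq_iff)
          show "{x, a} \<noteq> {x, z}" using ne_az .
        qed
        ultimately show False using ev by simp
      qed
      show ?thesis
      proof (cases "{a, z} \<in> OE")
        case True
        have "{a, x, z} = g" using z by (simp add: insert_commute)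
        moreover have "x \<noteq> z" using z(2) by simp
        ultimately have "a \<in> earsIn Z" using a_in[OF ax True] by blast
        then show ?thesis by blast
      next
        case azO: False
        have azE: "{a, z} \<in> E" using face_edge[OF gdef] z by auto
        obtain W0 where W0: "W0 \<subseteq> F" "bd2 W0 - OE = {{a, z}}"
          using chord_side[OF aOV(1) z(4) azE azO] by blast
        define W where "W = (if g \<in> W0 then F - W0 else W0)"
        have WF: "W \<subseteq> F" unfolding W_def using W0 by auto
        have bW: "bd2 W - OE = {{a, z}}" unfolding W_def using W0 flip_side by auto
        have gW: "g \<notin> W" unfolding W_def by auto
        have inner_is_az: "e = {a, z}" if "e \<in> bd2 W" "e \<notin> OE" for e
        proof -
          have "e \<in> bd2 W - OE" using that by blast
          then show ?thesis unfolding bW by simp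
        qed
        have xV: "x \<in> V" using aOV OV_V by blast
        have condx: "\<forall>t. {x, t} \<in> E \<longrightarrow> {x, t} \<notin> bd2 W \<or> {x, t} \<in> OE"
        proof (intro allI impI)
          fix t assume "{x, t} \<in> E"
          show "{x, t} \<notin> bd2 W \<or> {x, t} \<in> OE"
          proof (rule ccontr)
            assume "\<not> ({x, t} \<notin> bd2 W \<or> {x, t} \<in> OE)"
            then have "{x, t} = {a, z}" using inner_is_az by blast
            then have "x \<in> {a, z}" by blast
            then show False using a z by auto
          qed
        qed
        have xnot: "h \<notin> W" if "h \<in> F" "x \<in> h" for h
          using link_lemma[OF xV WF condx that] gF z gW by auto
        have azZ: "{a, z} \<notin> bd2 Z"
        proof
          assume "{a, z} \<in> bd2 Z"
          then have "{a, z} = {x, y}" using inner_is_xy azO by blast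
          then have "a \<in> {x, y}" by blast
          then show False using a by auto
        qed
        define I where "I = W - Z"
        have IF: "I \<subseteq> F" unfolding I_def using WF by blast
        have bI: "bd2 I \<subseteq> OE"
        proof
          fix e assume eI: "e \<in> bd2 I"
          show "e \<in> OE"
          proof (rule ccontr)
            assume eO: "e \<notin> OE"
            obtain h1 h2 where h: "fc e = {h1, h2}" "h1 \<noteq> h2" "h1 \<in> I" "h2 \<notin> I"
              using bd2_inner_split[OF IF eI eO] by blast
            have eE: "e \<in> E" using eI bd2_sub by blast
            have h1: "h1 \<in> W" "h1 \<notin> Z" using h(3) unfolding I_def by auto
            show False
            proof (cases "h2 \<in> W")
              case False
              then have "e \<in> bd2 W" using bd2_iff2[OF WF h(1,2) eE] h1 by simp
              then have eaz: "e = {a, z}" using inner_is_az eO by blast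
              have "g \<in> fc e" unfolding eaz fc_def using gF z by auto
              then have "g = h1 \<or> g = h2" using h(1) by simp
              then have "g = h2" using h1 gW by auto
              have "(h1 \<in> Z) = (h2 \<in> Z)" using bd2_iff2[OF Z h(1,2) eE] azZ eaz by simp
              then show False using h1 gZ \<open>g = h2\<close> by simp
            next
              case True
              then have "h2 \<in> Z" using h(4) unfolding I_def by blast
              then have "e \<in> bd2 Z" using bd2_iff2[OF Z h(1,2) eE] h1 by simp
              then have "e = {x, y}" using inner_is_xy eO by blast
              then have "x \<in> h1" using h(1) unfolding fc_def by blast
              moreover have "h1 \<in> F" using h(1) unfolding fc_def by blast
              ultimately show False using xnot h1 by blast
            qed
          qed
        qed
        have "I = {} \<or> I = F" using clopen[OF IF bI] .
        moreover have "I \<noteq> F" using gW gF unfolding I_def by blast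
        ultimately have "I = {}" by blast
        then have WZ: "W \<subseteq> Z - {g}" using gW unfolding I_def by blast
        have "card W \<le> card (Z - {g})" using WZ finZ by (intro card_mono) auto
        also have "\<dots> < card Z" using card_Diff1_less[OF finZ gZ] .
        finally have "card W < n" using cZ by simp
        then have "earsIn W \<noteq> {}" using IH[OF _ WF azE azO bW] by blast
        moreover have "earsIn W \<subseteq> earsIn Z" using earsIn_mono WZ by blast
        ultimately show ?thesis by blast
      qed
    qed
  qed
qed

lemma ear_lemma:
  assumes "Z \<subseteq> F" "{x, y} \<in> E" "{x, y} \<notin> OE" "bd2 Z - OE = {{x, y}}"
  shows "earsIn Z \<noteq> {}"
  using ear_lemma_aux assms by blast


definition R :: "'a set set" where "R = {f\<in>F. \<exists>v\<in>f. v \<notin> OV}"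
definition adjf :: "'a set \<Rightarrow> 'a set \<Rightarrow> bool" where
  "adjf f f' \<longleftrightarrow> (\<exists>e\<in>E. e \<subseteq> f \<and> e \<subseteq> f')"
definition closedR :: "'a set set \<Rightarrow> bool" where
  "closedR K \<longleftrightarrow> K \<subseteq> R \<and> (\<forall>f\<in>K. \<forall>f'\<in>R. adjf f f' \<longrightarrow> f' \<in> K)"
definition minK :: "'a set set \<Rightarrow> bool" where
  "minK K \<longleftrightarrow> closedR K \<and> K \<noteq> {} \<and> (\<forall>K'. closedR K' \<longrightarrow> K' \<noteq> {} \<longrightarrow> K' \<subseteq> K \<longrightarrow> K' = K)"
definition Sset :: "'a set" where "Sset = {x\<in>OV. \<exists>y\<in>V - OV. {x, y} \<in> E}"

lemma R_F: "R \<subseteq> F" unfolding R_def by blast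
lemma adjf_sym: "adjf f f' \<Longrightarrow> adjf f' f" unfolding adjf_def by blast
lemma minK_closed: "minK K \<Longrightarrow> closedR K" unfolding minK_def by blast
lemma closed_sub: "closedR K \<Longrightarrow> K \<subseteq> R" unfolding closedR_def by blast
lemma minK_F: "minK K \<Longrightarrow> K \<subseteq> F" using minK_closed closed_sub R_F by blast
lemma minK_ne: "minK K \<Longrightarrow> K \<noteq> {}" unfolding minK_def by blast

lemma exists_minK_aux:
  "\<forall>K0. card K0 = n \<longrightarrow> closedR K0 \<longrightarrow> K0 \<noteq> {} \<longrightarrow> (\<exists>K\<subseteq>K0. minK K)"
proof (induction n rule: less_induct)
  case (less n)
  show ?case
  proof (intro allI impI)
    fix K0 assume c: "card K0 = n" and cl: "closedR K0" and ne: "K0 \<noteq> {}"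
    show "\<exists>K\<subseteq>K0. minK K"
    proof (cases "minK K0")
      case True then show ?thesis by blast
    next
      case False
      then obtain K' where K': "closedR K'" "K' \<noteq> {}" "K' \<subseteq> K0" "K' \<noteq> K0"
        using cl ne unfolding minK_def by blast
      have "finite K0" using cl closed_sub R_F finite_sub_F by blast
      then have "card K' < card K0" using K' by (meson psubsetI psubset_card_mono)
      then obtain K where "K \<subseteq> K'" "minK K" using less.IH c K' by blast
      then show ?thesis using K' by blast
    qed
  qed
qed

lemma exists_minK: "closedR K0 \<Longrightarrow> K0 \<noteq> {} \<Longrightarrow> \<exists>K\<subseteq>K0. minK K"
  using exists_minK_aux by blast

lemma closedR_R: "closedR R" unfolding closedR_def by blast

lemma closedR_minus: assumes "closedR K" shows "closedR (R - K)"
  unfolding closedR_def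
proof (intro conjI ballI impI)
  fix f f' assume f: "f \<in> R - K" and f': "f' \<in> R" and a: "adjf f f'"
  show "f' \<in> R - K"
  proof (rule ccontr)
    assume "f' \<notin> R - K"
    then have "f' \<in> K" using f' by blast
    then have "f \<in> K" using assms adjf_sym[OF a] f unfolding closedR_def by blast
    then show False using f by blast
  qed
qed blast

lemma outer_face_notinR: assumes "e \<in> OE" "f \<in> F" "e \<subseteq> f" shows "f \<notin> R"
proof -
  obtain x a where "e = {x, a}" using edge2 OE_E assms(1) by blast
  then have "\<forall>v\<in>f. v \<in> OV" using outer_face_notR assms by blast
  then show ?thesis unfolding R_def by blast
qed

lemma adj_cross:
  assumes Z: "Z \<subseteq> F" and f: "f \<in> Z" and f': "f' \<in> F" "f' \<notin> Z" and a: "adjf f f'"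
  shows "\<exists>e. e \<in> bd2 Z \<and> e \<notin> OE \<and> fc e = {f, f'}"
proof -
  obtain e where e: "e \<in> E" "e \<subseteq> f" "e \<subseteq> f'" using a unfolding adjf_def by blast
  have ne: "f \<noteq> f'" using f f' by blast
  have m: "f \<in> fc e" "f' \<in> fc e" using e f f' Z unfolding fc_def by auto
  have eO: "e \<notin> OE"
  proof
    assume "e \<in> OE"
    then obtain g where "fc e = {g}" using outer1 by blast
    then show False using m ne by simp
  qed
  obtain f1 f2 where f12: "f1 \<noteq> f2" "fc e = {f1, f2}" using nonouter[OF e(1) eO] by blast
  have fce: "fc e = {f, f'}" using pair_eq_of_mem[of f f1 f2 f'] m f12 ne by simp
  have "e \<in> bd2 Z" using bd2_iff2[OF Z fce ne e(1)] f f' by simp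
  then show ?thesis using eO fce by blast
qed

lemma dichotomy:
  assumes K: "minK K" and Z: "Z \<subseteq> F" and bZ: "bd2 Z - OE \<subseteq> {e}"
    and ob: "ob \<in> fc e" "ob \<notin> R"
  shows "K \<subseteq> Z \<or> K \<inter> Z = {}"
proof -
  have cK: "closedR K" using minK_closed[OF K] .
  have KR: "K \<subseteq> R" using closed_sub[OF cK] .
  have noX: False if X: "X \<subseteq> F" "bd2 X - OE \<subseteq> {e}" "f \<in> X" "f \<in> K" "f' \<in> F" "f' \<notin> X" "f' \<in> R"
    "adjf f f'" for X f f'
  proof -
    obtain e' where e': "e' \<in> bd2 X" "e' \<notin> OE" "fc e' = {f, f'}" using adj_cross[OF X(1,3,5,6,8)] by blast
    then have "e' = e" using X(2) by blast
    then have "ob = f \<or> ob = f'" using ob(1) e'(3) by simp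
    then show False using ob(2) X(4,7) KR by blast
  qed
  have c1: "closedR (K \<inter> Z)" unfolding closedR_def
  proof (intro conjI ballI impI)
    fix f f' assume f: "f \<in> K \<inter> Z" and f': "f' \<in> R" and a: "adjf f f'"
    have "f' \<in> K" using cK f f' a unfolding closedR_def by blast
    moreover have "f' \<in> Z"
    proof (rule ccontr)
      assume "f' \<notin> Z"
      then show False using noX[OF Z bZ _ _ _ _ f' a] f f' R_F by blast
    qed
    ultimately show "f' \<in> K \<inter> Z" by blast
  qed (use KR in blast)
  have c2: "closedR (K - Z)" unfolding closedR_def
  proof (intro conjI ballI impI)
    fix f f' assume f: "f \<in> K - Z" and f': "f' \<in> R" and a: "adjf f f'"
    have fK: "f' \<in> K" using cK f f' a unfolding closedR_def by blast
    moreover have "f' \<notin> Z"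
    proof
      assume "f' \<in> Z"
      then show False using noX[OF Z bZ _ fK _ _ _ adjf_sym[OF a]] f KR R_F by blast
    qed
    ultimately show "f' \<in> K - Z" by blast
  qed (use KR in blast)
  show ?thesis
  proof (cases "K \<inter> Z = {}")
    case False
    then have "K \<inter> Z = K" using K c1 unfolding minK_def by blast
    then show ?thesis by blast
  qed simp
qed

lemma bdK:
  assumes cK: "closedR K" and e: "e \<in> bd2 K"
  shows "e \<notin> OE \<and> (\<exists>k ob. fc e = {k, ob} \<and> k \<noteq> ob \<and> k \<in> K \<and> ob \<notin> R \<and> ob \<in> F)
         \<and> e \<subseteq> Sset"
proof -
  have KR: "K \<subseteq> R" using closed_sub[OF cK] .
  have KF: "K \<subseteq> F" using KR R_F by blast
  have eE: "e \<in> E" using e bd2_sub by blast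
  have eO: "e \<notin> OE"
  proof
    assume eO: "e \<in> OE"
    have "odd (card {f\<in>K. e \<subseteq> f})" using e unfolding bd2_def by blast
    then have "{f\<in>K. e \<subseteq> f} \<noteq> {}" by (metis card.empty even_zero)
    then obtain k where "k \<in> K" "e \<subseteq> k" by blast
    then show False using outer_face_notinR[OF eO] KR KF by blast
  qed
  obtain k ob where ko: "fc e = {k, ob}" "k \<noteq> ob" "k \<in> K" "ob \<notin> K"
    using bd2_inner_split[OF KF e eO] by blast
  have oF: "ob \<in> F" "e \<subseteq> ob" "k \<in> F" "e \<subseteq> k" using ko(1) unfolding fc_def by auto
  have oR: "ob \<notin> R"
  proof
    assume "ob \<in> R"
    moreover have "adjf k ob" unfolding adjf_def using eE oF by blast
    ultimately have "ob \<in> K" using cK ko(3) unfolding closedR_def by blast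
    then show False using ko(4) by blast
  qed
  have "e \<subseteq> Sset"
  proof
    fix x assume x: "x \<in> e"
    have xV: "x \<in> V" using x EV[OF eE] by blast
    have xOV: "x \<in> OV"
    proof (rule ccontr)
      assume "x \<notin> OV"
      then have "ob \<in> R" unfolding R_def using oF x by blast
      then show False using oR by blast
    qed
    obtain v where v: "v \<in> k" "v \<notin> OV" using ko(3) KR unfolding R_def by blast
    have "v \<noteq> x" using v xOV by blast
    then have "{x, v} \<in> E" using face_edge[OF oF(3)] v x oF(4) by blast
    moreover have "v \<in> V" using F3[OF oF(3)] v by blast
    ultimately show "x \<in> Sset" unfolding Sset_def using xOV v by blast
  qed
  then show ?thesis using eO ko oR oF by blast
qed

definition side :: "'a set set \<Rightarrow> 'a set \<Rightarrow> 'a set set \<Rightarrow> bool" where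
  "side K e Z \<longleftrightarrow> Z \<subseteq> F \<and> bd2 Z - OE = {e} \<and> e \<in> E \<and> e \<notin> OE \<and>
     (\<exists>k ob. fc e = {k, ob} \<and> k \<noteq> ob \<and> k \<in> K \<and> ob \<notin> R \<and> ob \<in> Z \<and> k \<notin> Z) \<and> K \<inter> Z = {}"

definition Zof :: "'a set set \<Rightarrow> 'a set \<Rightarrow> 'a set set" where
  "Zof K e = (SOME Z. side K e Z)"

lemma side_D1: "side K e Z \<Longrightarrow> Z \<subseteq> F" unfolding side_def by (elim conjE)
lemma side_D2: "side K e Z \<Longrightarrow> bd2 Z - OE = {e}" unfolding side_def by (elim conjE)
lemma side_D3: "side K e Z \<Longrightarrow> e \<in> E" unfolding side_def by (elim conjE)
lemma side_D4: "side K e Z \<Longrightarrow> e \<notin> OE" unfolding side_def by (elim conjE)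
lemma side_D5: "side K e Z \<Longrightarrow> K \<inter> Z = {}" unfolding side_def by (elim conjE)
lemma side_D6: "side K e Z \<Longrightarrow> \<exists>k ob. fc e = {k, ob} \<and> k \<noteq> ob \<and> k \<in> K \<and> ob \<notin> R \<and> ob \<in> Z \<and> k \<notin> Z"
  unfolding side_def by (elim conjE)
lemma side_I: "Z \<subseteq> F \<Longrightarrow> bd2 Z - OE = {e} \<Longrightarrow> e \<in> E \<Longrightarrow> e \<notin> OE \<Longrightarrow>
   fc e = {k, ob} \<Longrightarrow> k \<noteq> ob \<Longrightarrow> k \<in> K \<Longrightarrow> ob \<notin> R \<Longrightarrow> ob \<in> Z \<Longrightarrow> k \<notin> Z \<Longrightarrow> K \<inter> Z = {} \<Longrightarrow>
   side K e Z"
  unfolding side_def by blast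
lemma side_kF: assumes "side K e Z" shows "\<exists>k ob. fc e = {k, ob} \<and> k \<noteq> ob \<and> k \<in> K \<and> ob \<notin> R \<and> ob \<in> Z \<and> k \<notin> Z \<and> k \<in> F \<and> ob \<in> F"
proof -
  obtain k ob where h: "fc e = {k, ob}" "k \<noteq> ob" "k \<in> K" "ob \<notin> R" "ob \<in> Z" "k \<notin> Z"
    using side_D6[OF assms] by blast
  have "k \<in> fc e" "ob \<in> fc e" using h(1) by simp_all
  then have "k \<in> F" "ob \<in> F" unfolding fc_def by simp_all
  then show ?thesis using h by blast
qed

lemma side_exists: assumes K: "minK K" and e: "e \<in> bd2 K" shows "\<exists>Z. side K e Z"
proof -
  have cK: "closedR K" using minK_closed[OF K] .
  obtain k ob where ko: "fc e = {k, ob}" "k \<noteq> ob" "k \<in> K" "ob \<notin> R" "ob \<in> F"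
    and eO: "e \<notin> OE" and eS: "e \<subseteq> Sset" using bdK[OF cK e] by blast
  have eE: "e \<in> E" using e bd2_sub by blast
  obtain x y where xy: "e = {x, y}" using edge2[OF eE] by blast
  have xyO: "x \<in> OV" "y \<in> OV" using eS xy unfolding Sset_def by auto
  obtain W0 where W0: "W0 \<subseteq> F" "bd2 W0 - OE = {{x, y}}"
    using chord_side[OF xyO] eE eO xy by blast
  define W where "W = (if k \<in> W0 then F - W0 else W0)"
  have WF: "W \<subseteq> F" unfolding W_def using W0 by auto
  have bW: "bd2 W - OE = {e}" unfolding W_def using W0 flip_side xy by auto
  have kF: "k \<in> F" using ko(1) unfolding fc_def by blast
  have kW: "k \<notin> W" unfolding W_def using kF by auto
  have "e \<in> bd2 W" using bW by blast
  then have oW: "ob \<in> W" using bd2_iff2[OF WF ko(1,2) eE] kW by simp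
  have "ob \<in> fc e" using ko(1) by simp
  then have "K \<subseteq> W \<or> K \<inter> W = {}" using dichotomy[OF K WF _ _ ko(4)] bW by blast
  then have "K \<inter> W = {}" using ko(3) kW by blast
  then have "side K e W" using side_I[OF WF bW eE eO ko(1,2,3,4) oW kW] by blast
  then show ?thesis by blast
qed

lemma Zof_side: "minK K \<Longrightarrow> e \<in> bd2 K \<Longrightarrow> side K e (Zof K e)"
  unfolding Zof_def by (rule someI_ex) (rule side_exists)

lemma side_ears: assumes "side K e Z" shows "earsIn Z \<noteq> {}"
proof -
  have h: "Z \<subseteq> F" "bd2 Z - OE = {e}" "e \<in> E" "e \<notin> OE"
    using side_D1[OF assms] side_D2[OF assms] side_D3[OF assms] side_D4[OF assms] by blast+
  obtain x y where "e = {x, y}" using edge2[OF h(3)] by blast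
  then have "bd2 Z - OE = {{x, y}}" "{x, y} \<in> E" "{x, y} \<notin> OE" using h by simp_all
  then show ?thesis using ear_lemma[of Z x y] h(1) by blast
qed

lemma side_cross:
  assumes a: "side K ea Za" and b: "side K eb Zb" and ne: "ea \<noteq> eb"
    and fc: "fc e = {h1, h2}" and h1: "h1 \<in> Za" "h1 \<in> Zb" and h2: "h2 \<notin> Za" and eO: "e \<notin> OE"
    and hne: "h1 \<noteq> h2" and eE: "e \<in> E"
  shows False
proof -
  have ZaF: "Za \<subseteq> F" and bZa: "bd2 Za - OE = {ea}" using side_D1[OF a] side_D2[OF a] by blast+
  have ZbF: "Zb \<subseteq> F" and bZb: "bd2 Zb - OE = {eb}" and KZb: "K \<inter> Zb = {}"
    using side_D1[OF b] side_D2[OF b] side_D5[OF b] by blast+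
  obtain k ob where ko: "fc ea = {k, ob}" "k \<noteq> ob" "k \<in> K" "ob \<in> Za" "k \<notin> Za"
    using side_D6[OF a] by blast
  have eaE: "ea \<in> E" "ea \<notin> OE" using side_D3[OF a] side_D4[OF a] by blast+
  have "e \<in> bd2 Za" using bd2_iff2[OF ZaF fc hne eE] h1 h2 by simp
  then have "e \<in> bd2 Za - OE" using eO by blast
  then have "e = ea" unfolding bZa by simp
  then have "h1 \<in> {k, ob}" using fc ko(1) by simp
  then have "h1 = k \<or> h1 = ob" by simp
  moreover have "h1 \<noteq> k"
  proof
    assume "h1 = k" then show False using h1(1) ko(5) by simp
  qed
  ultimately have "h1 = ob" by simp
  then have oZb: "ob \<in> Zb" using h1 by simp
  have "ea \<notin> bd2 Zb"
  proof
    assume "ea \<in> bd2 Zb"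
    then have "ea \<in> bd2 Zb - OE" using eaE by blast
    then show False unfolding bZb using ne by simp
  qed
  then have "(k \<in> Zb) = (ob \<in> Zb)" using bd2_iff2[OF ZbF ko(1,2) eaE(1)] by blast
  then show False using oZb ko(3) KZb by blast
qed

lemma side_disj:
  assumes K: "minK K" and a: "side K e1 Z1" and b: "side K e2 Z2" and ne: "e1 \<noteq> e2"
  shows "Z1 \<inter> Z2 = {}"
proof -
  have Z1F: "Z1 \<subseteq> F" using side_D1[OF a] .
  define I where "I = Z1 \<inter> Z2"
  have IF: "I \<subseteq> F" unfolding I_def using Z1F by blast
  have "bd2 I \<subseteq> OE"
  proof
    fix e assume eI: "e \<in> bd2 I"
    show "e \<in> OE"
    proof (rule ccontr)
      assume eO: "e \<notin> OE"
      obtain h1 h2 where h: "fc e = {h1, h2}" "h1 \<noteq> h2" "h1 \<in> I" "h2 \<notin> I"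
        using bd2_inner_split[OF IF eI eO] by blast
      show False
      proof (cases "h2 \<in> Z1")
        case False
        moreover have "e \<in> E" using eI bd2_sub by blast
        ultimately show False using side_cross[OF a b ne h(1)] h eO unfolding I_def by blast
      next
        case True
        then have "h2 \<notin> Z2" using h(4) unfolding I_def by blast
        moreover have "e \<in> E" using eI bd2_sub by blast
        ultimately show False using side_cross[OF b a ne[symmetric] h(1)] h eO unfolding I_def by blast
      qed
    qed
  qed
  then have "I = {} \<or> I = F" using clopen[OF IF] by blast
  moreover obtain k where "k \<in> F" "k \<notin> Z1" using side_kF[OF a] by blast
  ultimately show ?thesis unfolding I_def by blast
qed


definition D2set :: "'a set" where "D2set = {x\<in>OV. gdeg E x = 2}"

lemma earsIn_D2: "earsIn Z \<subseteq> D2set" unfolding earsIn_def D2set_def by blast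
lemma finD2: "finite D2set"
proof -
  have "D2set \<subseteq> V" unfolding D2set_def using OV_V by blast
  then show ?thesis using finite_subset[OF _ finV] by blast
qed

lemma bdK_ne: assumes K: "minK K" shows "bd2 K \<noteq> {}"
proof
  assume b: "bd2 K = {}"
  have KF: "K \<subseteq> F" using minK_F[OF K] .
  have "K = {} \<or> K = F" using clopen[OF KF] b by simp
  then have KeqF: "K = F" using minK_ne[OF K] by blast
  obtain e where e: "e \<in> OE" using OE_ne by blast
  then have "fc e \<noteq> {}" using fc_ne OE_E by blast
  then obtain f where f: "f \<in> F" "e \<subseteq> f" unfolding fc_def by blast
  then have "f \<notin> R" using outer_face_notinR[OF e] by blast
  moreover have "f \<in> R" using KeqF f closed_sub[OF minK_closed[OF K]] by blast
  ultimately show False by blast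
qed

lemma three_edges:
  assumes KF: "K \<subseteq> F" and e0: "e0 \<in> bd2 K"
  shows "\<exists>x y z w. e0 = {x, y} \<and> {x, z} \<in> bd2 K \<and> {y, w} \<in> bd2 K \<and> x \<noteq> y \<and> z \<noteq> y \<and> z \<noteq> x
     \<and> w \<noteq> x \<and> w \<noteq> y \<and> {x, y} \<noteq> {x, z} \<and> {x, y} \<noteq> {y, w} \<and> {x, z} \<noteq> {y, w}"
proof -
  obtain x y where xy: "e0 = {x, y}" "x \<noteq> y" using edge2 e0 bd2_sub by blast
  have b1: "{x, y} \<in> bd2 K" using e0 xy by simp
  obtain z where z: "{x, z} \<in> bd2 K" "z \<noteq> y" "z \<noteq> x" using other_edge[OF KF b1] by blast
  have b2: "{y, x} \<in> bd2 K" using b1 by (simp add: insert_commute)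
  obtain w where w: "{y, w} \<in> bd2 K" "w \<noteq> x" "w \<noteq> y" using other_edge[OF KF b2] by blast
  have "{x, y} \<noteq> {x, z}" using z by (simp add: doubleton_eq_iff)
  moreover have "{x, y} \<noteq> {y, w}" using w xy by (simp add: doubleton_eq_iff)
  moreover have "{x, z} \<noteq> {y, w}" using w xy by (simp add: doubleton_eq_iff)
  ultimately show ?thesis using xy z w by (intro exI[of _ x] exI[of _ y] exI[of _ z] exI[of _ w]) simp
qed

lemma nested:
  assumes a: "side K e0 Z" and b: "side K' e' Z'" and K'R: "K' \<subseteq> R" and disj: "K' \<inter> K = {}"
    and K'Z: "K' \<subseteq> Z" and KZ': "K \<inter> Z' = {}"
  shows "Z' \<subseteq> Z"
proof -
  have ZF: "Z \<subseteq> F" using side_D1[OF a] .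
  have Z'F: "Z' \<subseteq> F" using side_D1[OF b] .
  obtain k ob where ko: "fc e0 = {k, ob}" "k \<noteq> ob" "k \<in> K" "ob \<notin> R" "ob \<in> Z" "k \<notin> Z" "k \<in> F"
    using side_kF[OF a] by blast
  obtain k' ob' where ko': "fc e' = {k', ob'}" "k' \<noteq> ob'" "k' \<in> K'" "ob' \<notin> R" "ob' \<in> Z'" "k' \<notin> Z'"
    using side_kF[OF b] by blast
  have bZ: "bd2 Z - OE = {e0}" using side_D2[OF a] .
  have bZ': "bd2 Z' - OE = {e'}" using side_D2[OF b] .
  define I where "I = Z' - Z"
  have IF: "I \<subseteq> F" unfolding I_def using Z'F by blast
  have "bd2 I \<subseteq> OE"
  proof
    fix e assume eI: "e \<in> bd2 I"
    show "e \<in> OE"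
    proof (rule ccontr)
      assume eO: "e \<notin> OE"
      obtain h1 h2 where h: "fc e = {h1, h2}" "h1 \<noteq> h2" "h1 \<in> I" "h2 \<notin> I"
        using bd2_inner_split[OF IF eI eO] by blast
      have eE: "e \<in> E" using eI bd2_sub by blast
      have h1: "h1 \<in> Z'" "h1 \<notin> Z" using h(3) unfolding I_def by auto
      show False
      proof (cases "h2 \<in> Z'")
        case False
        then have "e \<in> bd2 Z'" using bd2_iff2[OF Z'F h(1,2) eE] h1 by simp
        then have "e \<in> bd2 Z' - OE" using eO by blast
        then have ee: "e = e'" unfolding bZ' by simp
        have "h1 \<in> {k', ob'}" "h2 \<in> {k', ob'}" using h(1) ko'(1) ee by simp_all
        then have "h1 = k' \<or> h1 = ob'" "h2 = k' \<or> h2 = ob'" by simp_all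
        moreover have "h1 \<noteq> k'" using h1(1) ko'(6) by blast
        ultimately have "h1 = ob'" "h2 = k'" using h(2) by auto
        then have "h2 \<in> Z" using ko'(3) K'Z by blast
        then have "e \<in> bd2 Z" using bd2_iff2[OF ZF h(1,2) eE] h1 by simp
        then have "e \<in> bd2 Z - OE" using eO by blast
        then have "e = e0" unfolding bZ by simp
        then have "h2 \<in> {k, ob}" using h(1) ko(1) by simp
        then have "h2 = k \<or> h2 = ob" by simp
        then show False using \<open>h2 = k'\<close> ko'(3) ko(3) disj ko(4) K'R by blast
      next
        case True
        then have "h2 \<in> Z" using h(4) unfolding I_def by blast
        then have "e \<in> bd2 Z" using bd2_iff2[OF ZF h(1,2) eE] h1 by simp
        then have "e \<in> bd2 Z - OE" using eO by blast
        then have "e = e0" unfolding bZ by simp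
        then have "h1 \<in> {k, ob}" using h(1) ko(1) by simp
        then have "h1 = k \<or> h1 = ob" by simp
        moreover have "h1 \<noteq> ob" using h1(2) ko(5) by blast
        ultimately have "h1 = k" by simp
        then show False using h1(1) ko(3) KZ' by blast
      qed
    qed
  qed
  then have "I = {} \<or> I = F" using clopen[OF IF] by blast
  moreover have "k \<notin> I" unfolding I_def using ko(3) KZ' by blast
  ultimately have "I = {}" using ko(7) by blast
  then show ?thesis unfolding I_def by blast
qed

lemma twoears:
  assumes K: "minK K" and e0: "e0 \<in> bd2 K" and K': "minK K'" and disj: "K' \<inter> K = {}"
    and K'Z: "K' \<subseteq> Zof K e0"
  shows "\<exists>w1 w2. w1 \<noteq> w2 \<and> w1 \<in> earsIn (Zof K e0) \<and> w2 \<in> earsIn (Zof K e0)"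
proof -
  define Z where "Z = Zof K e0"
  have sZ: "side K e0 Z" unfolding Z_def using Zof_side[OF K e0] .
  have K'F: "K' \<subseteq> F" using minK_F[OF K'] .
  have K'R: "K' \<subseteq> R" using closed_sub[OF minK_closed[OF K']] .
  obtain e1 where e1: "e1 \<in> bd2 K'" using bdK_ne[OF K'] by blast
  obtain x y z w where xyzw: "e1 = {x, y}" "{x, z} \<in> bd2 K'" "{y, w} \<in> bd2 K'"
    "{x, y} \<noteq> {x, z}" "{x, y} \<noteq> {y, w}" "{x, z} \<noteq> {y, w}"
    using three_edges[OF K'F e1] by blast
  have dich: "K \<subseteq> Zof K' e \<or> K \<inter> Zof K' e = {}" if "e \<in> bd2 K'" for e
  proof -
    have s: "side K' e (Zof K' e)" using Zof_side[OF K' that] .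
    obtain k ob where "fc e = {k, ob}" "ob \<notin> R" using side_kF[OF s] by blast
    then have "ob \<in> fc e" "ob \<notin> R" by simp_all
    then show ?thesis using dichotomy[OF K side_D1[OF s]] side_D2[OF s] by blast
  qed
  have pair: "\<exists>w1 w2. w1 \<noteq> w2 \<and> w1 \<in> earsIn Z \<and> w2 \<in> earsIn Z"
    if ej: "ej \<in> bd2 K'" and el: "el \<in> bd2 K'" and ne: "ej \<noteq> el"
      and dj: "K \<inter> Zof K' ej = {}" and dl: "K \<inter> Zof K' el = {}" for ej el
  proof -
    have sj: "side K' ej (Zof K' ej)" using Zof_side[OF K' ej] .
    have sl: "side K' el (Zof K' el)" using Zof_side[OF K' el] .
    have subj: "Zof K' ej \<subseteq> Z" using nested[OF sZ sj K'R disj _ dj] K'Z unfolding Z_def by blast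
    have subl: "Zof K' el \<subseteq> Z" using nested[OF sZ sl K'R disj _ dl] K'Z unfolding Z_def by blast
    obtain w1 where w1: "w1 \<in> earsIn (Zof K' ej)" using side_ears[OF sj] by blast
    obtain w2 where w2: "w2 \<in> earsIn (Zof K' el)" using side_ears[OF sl] by blast
    have "Zof K' ej \<inter> Zof K' el = {}" using side_disj[OF K' sj sl ne] .
    then have "w1 \<noteq> w2" using earsIn_disj w1 w2 by blast
    moreover have "w1 \<in> earsIn Z" "w2 \<in> earsIn Z" using w1 w2 earsIn_mono subj subl by blast+
    ultimately show ?thesis by blast
  qed
  have KneF: "K \<noteq> {}" using minK_ne[OF K] .
  have d12: "Zof K' e1 \<inter> Zof K' {x, z} = {}"
    using side_disj[OF K' Zof_side[OF K' e1] Zof_side[OF K' xyzw(2)]] xyzw by simp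
  have d13: "Zof K' e1 \<inter> Zof K' {y, w} = {}"
    using side_disj[OF K' Zof_side[OF K' e1] Zof_side[OF K' xyzw(3)]] xyzw by simp
  have d23: "Zof K' {x, z} \<inter> Zof K' {y, w} = {}"
    using side_disj[OF K' Zof_side[OF K' xyzw(2)] Zof_side[OF K' xyzw(3)]] xyzw by simp
  have ne12: "e1 \<noteq> {x, z}" "e1 \<noteq> {y, w}" "{x, z} \<noteq> {y, w}" using xyzw by simp_all
  show ?thesis
  proof (cases "K \<inter> Zof K' e1 = {}")
    case c1: True
    show ?thesis
    proof (cases "K \<inter> Zof K' {x, z} = {}")
      case True
      then show ?thesis using pair[OF e1 xyzw(2) ne12(1) c1] unfolding Z_def by blast
    next
      case False
      then have "K \<subseteq> Zof K' {x, z}" using dich[OF xyzw(2)] by blast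
      then have "K \<inter> Zof K' {y, w} = {}" using d23 by blast
      then show ?thesis using pair[OF e1 xyzw(3) ne12(2) c1] unfolding Z_def by blast
    qed
  next
    case False
    then have "K \<subseteq> Zof K' e1" using dich[OF e1] by blast
    then have "K \<inter> Zof K' {x, z} = {}" "K \<inter> Zof K' {y, w} = {}" using d12 d13 by blast+
    then show ?thesis using pair[OF xyzw(2) xyzw(3) ne12(3)] unfolding Z_def by blast
  qed
qed

definition earOf :: "'a set set \<Rightarrow> 'a set \<Rightarrow> 'a" where
  "earOf K e = (SOME w. w \<in> earsIn (Zof K e))"

lemma earOf_in: assumes "minK K" "e \<in> bd2 K" shows "earOf K e \<in> earsIn (Zof K e)"
proof -
  have "earsIn (Zof K e) \<noteq> {}" using side_ears[OF Zof_side[OF assms]] .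
  then show ?thesis unfolding earOf_def by (metis some_in_eq)
qed

lemma earOf_inj: assumes K: "minK K" shows "inj_on (earOf K) (bd2 K)"
proof (rule inj_onI)
  fix e1 e2 assume e: "e1 \<in> bd2 K" "e2 \<in> bd2 K" "earOf K e1 = earOf K e2"
  show "e1 = e2"
  proof (rule ccontr)
    assume ne: "e1 \<noteq> e2"
    have "Zof K e1 \<inter> Zof K e2 = {}" using side_disj[OF K Zof_side[OF K e(1)] Zof_side[OF K e(2)] ne] .
    then have "earsIn (Zof K e1) \<inter> earsIn (Zof K e2) = {}" by (rule earsIn_disj)
    then show False using earOf_in[OF K e(1)] earOf_in[OF K e(2)] e(3) by auto
  qed
qed

lemma count_le: assumes K: "minK K" shows "card (bd2 K) \<le> card D2set"
proof -
  have "earOf K ` bd2 K \<subseteq> D2set" using earOf_in[OF K] earsIn_D2 by blast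
  then have "card (earOf K ` bd2 K) \<le> card D2set" using finD2 card_mono by blast
  then show ?thesis using card_image[OF earOf_inj[OF K]] by simp
qed

lemma count_extra:
  assumes K: "minK K" and e0: "e0 \<in> bd2 K" and w: "w1 \<noteq> w2" "w1 \<in> earsIn (Zof K e0)" "w2 \<in> earsIn (Zof K e0)"
  shows "card (bd2 K) + 1 \<le> card D2set"
proof -
  define A where "A = earOf K ` (bd2 K - {e0})"
  have finB: "finite (bd2 K)" using finite_sub_E[OF bd2_sub] .
  have cA: "card A = card (bd2 K) - 1"
  proof -
    have "inj_on (earOf K) (bd2 K - {e0})" using earOf_inj[OF K] inj_on_subset by blast
    then have "card A = card (bd2 K - {e0})" unfolding A_def by (rule card_image)
    then show ?thesis using e0 finB by simp
  qed
  have disj: "A \<inter> {w1, w2} = {}"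
  proof -
    have "earOf K e \<notin> earsIn (Zof K e0)" if "e \<in> bd2 K" "e \<noteq> e0" for e
    proof -
      have "Zof K e \<inter> Zof K e0 = {}" using side_disj[OF K Zof_side[OF K that(1)] Zof_side[OF K e0] that(2)] .
      then have "earsIn (Zof K e) \<inter> earsIn (Zof K e0) = {}" by (rule earsIn_disj)
      then show ?thesis using earOf_in[OF K that(1)] by blast
    qed
    then show ?thesis unfolding A_def using w by blast
  qed
  have sub: "A \<union> {w1, w2} \<subseteq> D2set" unfolding A_def using earOf_in[OF K] earsIn_D2 w by blast
  have finA: "finite A" unfolding A_def using finB by simp
  have "card (A \<union> {w1, w2}) = card A + 2" using card_Un_disjoint[OF finA _ disj] w(1) by simp
  moreover have "card (A \<union> {w1, w2}) \<le> card D2set" using card_mono[OF finD2 sub] .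
  moreover have "card (bd2 K) \<ge> 1" using e0 finB by (metis One_nat_def Suc_leI card_gt_0_iff empty_iff)
  ultimately show ?thesis using cA by linarith
qed

lemma cover: assumes K: "minK K" shows "F \<subseteq> K \<union> (\<Union>e\<in>bd2 K. Zof K e)"
proof -
  have KF: "K \<subseteq> F" using minK_F[OF K] .
  define I where "I = F - K - (\<Union>e\<in>bd2 K. Zof K e)"
  have IF: "I \<subseteq> F" unfolding I_def by blast
  have "bd2 I \<subseteq> OE"
  proof
    fix e assume eI: "e \<in> bd2 I"
    show "e \<in> OE"
    proof (rule ccontr)
      assume eO: "e \<notin> OE"
      obtain h1 h2 where h: "fc e = {h1, h2}" "h1 \<noteq> h2" "h1 \<in> I" "h2 \<notin> I"
        using bd2_inner_split[OF IF eI eO] by blast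
      have eE: "e \<in> E" using eI bd2_sub by blast
      have h2F: "h2 \<in> F" using h(1) unfolding fc_def by auto
      have h1: "h1 \<notin> K" "\<And>e'. e' \<in> bd2 K \<Longrightarrow> h1 \<notin> Zof K e'" using h(3) unfolding I_def by auto
      show False
      proof (cases "h2 \<in> K")
        case True
        then have eK: "e \<in> bd2 K" using bd2_iff2[OF KF h(1,2) eE] h1(1) by simp
        obtain k ob where ko: "fc e = {k, ob}" "k \<in> K" "ob \<in> Zof K e"
          using side_kF[OF Zof_side[OF K eK]] by blast
        have "h1 \<in> {k, ob}" using h(1) ko(1) by simp
        then have "h1 = k \<or> h1 = ob" by simp
        then show False using h1 ko eK by blast
      next
        case False
        then obtain e' where e': "e' \<in> bd2 K" "h2 \<in> Zof K e'" using h(4) h2F unfolding I_def by blast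
        have s: "side K e' (Zof K e')" using Zof_side[OF K e'(1)] .
        have "e \<in> bd2 (Zof K e')" using bd2_iff2[OF side_D1[OF s] h(1,2) eE] h1(2)[OF e'(1)] e'(2) by simp
        then have "e \<in> bd2 (Zof K e') - OE" using eO by blast
        then have ee: "e = e'" unfolding side_D2[OF s] by simp
        obtain k ob where ko: "fc e' = {k, ob}" "k \<in> K" "ob \<in> Zof K e'" using side_kF[OF s] by blast
        have "h1 \<in> {k, ob}" using h(1) ko(1) ee by simp
        then have "h1 = k \<or> h1 = ob" by simp
        then show False using h1 ko e' by blast
      qed
    qed
  qed
  then have "I = {} \<or> I = F" using clopen[OF IF] by blast
  moreover have "I \<noteq> F" using minK_ne[OF K] KF unfolding I_def by blast
  ultimately have "I = {}" by blast
  then show ?thesis unfolding I_def by blast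
qed

lemma vertex_in_bd:
  assumes K: "minK K" and s: "s \<in> V" and h: "h \<in> K" "s \<in> h" and h': "h' \<in> F" "s \<in> h'" "h' \<notin> K"
  shows "\<exists>e\<in>bd2 K. s \<in> e"
proof -
  obtain e where e: "e \<in> bd2 K" "h' \<in> Zof K e" using cover[OF K] h' by blast
  have sd: "side K e (Zof K e)" using Zof_side[OF K e(1)] .
  have ZF: "Zof K e \<subseteq> F" using side_D1[OF sd] .
  show ?thesis
  proof (rule ccontr)
    assume nse: "\<not> (\<exists>e\<in>bd2 K. s \<in> e)"
    have cond: "\<forall>t. {s, t} \<in> E \<longrightarrow> {s, t} \<notin> bd2 (Zof K e) \<or> {s, t} \<in> OE"
    proof (intro allI impI)
      fix t assume "{s, t} \<in> E"
      show "{s, t} \<notin> bd2 (Zof K e) \<or> {s, t} \<in> OE"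
      proof (rule ccontr)
        assume "\<not> ({s, t} \<notin> bd2 (Zof K e) \<or> {s, t} \<in> OE)"
        then have "{s, t} \<in> bd2 (Zof K e) - OE" by blast
        then have "{s, t} = e" unfolding side_D2[OF sd] by simp
        then show False using nse e(1) by blast
      qed
    qed
    have hF: "h \<in> F" using h minK_F[OF K] by blast
    have "h \<in> Zof K e \<longleftrightarrow> h' \<in> Zof K e" using link_lemma[OF s ZF cond hF h(2) h'(1,2)] .
    then have "h \<in> Zof K e" using e(2) by blast
    then show False using side_D5[OF sd] h(1) by blast
  qed
qed


lemma main:
  assumes inner: "V - OV \<noteq> {}"
  shows "card Sset \<ge> 3 \<and> card D2set \<ge> 3 \<and>
         (card D2set = 3 \<longrightarrow> card Sset = 3 \<and> (\<forall>x\<in>Sset. \<forall>y\<in>Sset. x \<noteq> y \<longrightarrow> {x, y} \<in> E) \<and>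
            (\<forall>v\<in>V - OV. \<forall>z\<in>OV - Sset. \<not> reach_avoiding V E Sset v z))"
proof -
  obtain v0 where v0: "v0 \<in> V" "v0 \<notin> OV" using inner by blast
  obtain f0 where f0: "f0 \<in> F" "v0 \<in> f0" using v0 V_Union by blast
  have "f0 \<in> R" unfolding R_def using f0 v0 by blast
  then obtain K where K: "K \<subseteq> R" "minK K" using exists_minK[OF closedR_R] by blast
  have KF: "K \<subseteq> F" using minK_F[OF K(2)] .
  have cK: "closedR K" using minK_closed[OF K(2)] .
  obtain e0 where e0: "e0 \<in> bd2 K" using bdK_ne[OF K(2)] by blast
  obtain x y z w where xyzw: "e0 = {x, y}" "{x, z} \<in> bd2 K" "{y, w} \<in> bd2 K" "x \<noteq> y" "z \<noteq> y"
    "z \<noteq> x" "w \<noteq> x" "w \<noteq> y" "{x, y} \<noteq> {x, z}" "{x, y} \<noteq> {y, w}" "{x, z} \<noteq> {y, w}"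
    using three_edges[OF KF e0] by blast
  have xyb: "{x, y} \<in> bd2 K" using e0 xyzw(1) by simp
  have B3: "{{x, y}, {x, z}, {y, w}} \<subseteq> bd2 K" using xyb xyzw(2,3) by simp
  have cB3: "card {{x, y}, {x, z}, {y, w}} = 3" using card_three[OF xyzw(9,10,11)] .
  have finB: "finite (bd2 K)" using finite_sub_E[OF bd2_sub] .
  have cB: "card (bd2 K) \<ge> 3" using card_mono[OF finB B3] cB3 by simp
  have D3: "card D2set \<ge> 3" using count_le[OF K(2)] cB by simp
  have finS: "finite Sset"
  proof -
    have "Sset \<subseteq> V" unfolding Sset_def using OV_V by blast
    then show ?thesis using finite_subset[OF _ finV] by blast
  qed
  have xyS: "{x, y} \<subseteq> Sset" using bdK[OF cK xyb] by blast
  have xzS: "{x, z} \<subseteq> Sset" using bdK[OF cK xyzw(2)] by blast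
  have S3sub: "{x, y, z} \<subseteq> Sset" using xyS xzS by blast
  have cS3: "card {x, y, z} = 3" using xyzw by simp
  have S3: "card Sset \<ge> 3" using card_mono[OF finS S3sub] cS3 by simp
  have eq: "card Sset = 3 \<and> (\<forall>a\<in>Sset. \<forall>b\<in>Sset. a \<noteq> b \<longrightarrow> {a, b} \<in> E) \<and>
            (\<forall>v\<in>V - OV. \<forall>z'\<in>OV - Sset. \<not> reach_avoiding V E Sset v z')"
    if c: "card D2set = 3"
  proof -
    have "card (bd2 K) \<le> 3" using count_le[OF K(2)] c by simp
    then have Beq: "bd2 K = {{x, y}, {x, z}, {y, w}}"
      using card_subset_eq[OF finB B3] cB3 cB by simp
    have zx: "{z, x} \<in> bd2 K" using xyzw(2) by (simp add: insert_commute)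
    obtain t where t: "{z, t} \<in> bd2 K" "t \<noteq> x" "t \<noteq> z" using other_edge[OF KF zx] by blast
    have "{z, t} = {x, y} \<or> {z, t} = {x, z} \<or> {z, t} = {y, w}" using t(1) Beq by simp
    then have wz: "w = z" using t xyzw by (auto simp: doubleton_eq_iff)
    have Beq': "bd2 K = {{x, y}, {x, z}, {y, z}}" using Beq wz by simp
    have RK: "R \<subseteq> K"
    proof (rule ccontr)
      assume "\<not> R \<subseteq> K"
      then have "R - K \<noteq> {}" by blast
      then obtain K' where K': "K' \<subseteq> R - K" "minK K'" using exists_minK[OF closedR_minus[OF cK]] by blast
      have disj: "K' \<inter> K = {}" using K'(1) by blast
      obtain f' where f': "f' \<in> K'" using minK_ne[OF K'(2)] by blast
      have f'F: "f' \<in> F" using f' minK_F[OF K'(2)] by blast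
      have "f' \<notin> K" using f' disj by blast
      then obtain e' where e': "e' \<in> bd2 K" "f' \<in> Zof K e'" using cover[OF K(2)] f'F by blast
      have sd: "side K e' (Zof K e')" using Zof_side[OF K(2) e'(1)] .
      obtain k ob where ko: "fc e' = {k, ob}" "ob \<notin> R" using side_kF[OF sd] by blast
      have "ob \<in> fc e'" using ko(1) by simp
      then have "K' \<subseteq> Zof K e' \<or> K' \<inter> Zof K e' = {}"
        using dichotomy[OF K'(2) side_D1[OF sd] _ _ ko(2)] side_D2[OF sd] by blast
      then have "K' \<subseteq> Zof K e'" using f' e'(2) by blast
      then obtain w1 w2 where "w1 \<noteq> w2" "w1 \<in> earsIn (Zof K e')" "w2 \<in> earsIn (Zof K e')"
        using twoears[OF K(2) e'(1) K'(2) disj] by blast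
      then have "card (bd2 K) + 1 \<le> card D2set" using count_extra[OF K(2) e'(1)] by blast
      then show False using c cB by simp
    qed
    have bdS: "\<exists>e\<in>bd2 K. s \<in> e" if s: "s \<in> Sset" for s
    proof -
      obtain v where v: "v \<in> V - OV" "{s, v} \<in> E" "s \<in> OV" using s unfolding Sset_def by blast
      obtain h where h: "h \<in> F" "{s, v} \<subseteq> h" using v(2) E_iff by blast
      have hK: "h \<in> K" using h v RK unfolding R_def by blast
      obtain e where e: "e \<in> OE" "s \<in> e" using v(3) OV_def' by blast
      have "fc e \<noteq> {}" using fc_ne OE_E e(1) by blast
      then obtain h' where h': "h' \<in> F" "e \<subseteq> h'" unfolding fc_def by blast
      have "h' \<notin> R" using outer_face_notinR[OF e(1) h'] .
      then have "h' \<notin> K" using K(1) by blast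
      moreover have "s \<in> V" using v(3) OV_V by blast
      ultimately show ?thesis using vertex_in_bd[OF K(2) _ hK _ h'(1)] h h' e by blast
    qed
    have Seq: "Sset = {x, y, z}"
    proof
      show "Sset \<subseteq> {x, y, z}"
      proof
        fix s assume "s \<in> Sset"
        then obtain e where "e \<in> bd2 K" "s \<in> e" using bdS by blast
        then show "s \<in> {x, y, z}" using Beq' by auto
      qed
    qed (rule S3sub)
    have cS: "card Sset = 3" using Seq cS3 by simp
    have Es: "{x, y} \<in> E" "{x, z} \<in> E" "{y, z} \<in> E" using Beq' bd2_sub by auto
    then have Es': "{y, x} \<in> E" "{z, x} \<in> E" "{z, y} \<in> E" by (simp_all add: insert_commute)
    have adj: "\<forall>a\<in>Sset. \<forall>b\<in>Sset. a \<noteq> b \<longrightarrow> {a, b} \<in> E"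
      unfolding Seq using Es Es' by auto
    have SbdK: "s \<in> Sset" if "e \<in> bd2 K" "s \<in> e" for e s
      using bdK[OF cK that(1)] that(2) by blast
    have sep: "\<not> reach_avoiding V E Sset v z'" if v: "v \<in> V - OV" and z': "z' \<in> OV - Sset" for v z'
    proof
      assume "reach_avoiding V E Sset v z'"
      then have r: "(v, z') \<in> (adj_rel (V - Sset) E)\<^sup>*" unfolding reach_avoiding_def .
      define P where "P u \<longleftrightarrow> u \<in> V - Sset \<and> (\<forall>h\<in>F. u \<in> h \<longrightarrow> h \<in> K)" for u
      have Pv: "P v" unfolding P_def
      proof (intro conjI ballI impI)
        show "v \<in> V - Sset" using v unfolding Sset_def by blast
      next
        fix h assume "h \<in> F" "v \<in> h"
        then have "h \<in> R" unfolding R_def using v by blast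
        then show "h \<in> K" using RK by blast
      qed
      have "P z'" using r
      proof (induction rule: rtrancl_induct)
        case base then show ?case using Pv .
      next
        case (step u u')
        then have uu: "{u, u'} \<in> E" "u' \<in> V - Sset" unfolding adj_rel_def by auto
        obtain h where h: "h \<in> F" "{u, u'} \<subseteq> h" using uu(1) E_iff by blast
        have hK: "h \<in> K" using step.IH h unfolding P_def by blast
        show ?case unfolding P_def
        proof (intro conjI ballI impI)
          show "u' \<in> V - Sset" using uu(2) .
        next
          fix h' assume h': "h' \<in> F" "u' \<in> h'"
          show "h' \<in> K"
          proof (rule ccontr)
            assume "h' \<notin> K"
            then obtain e where "e \<in> bd2 K" "u' \<in> e"
              using vertex_in_bd[OF K(2) _ hK _ h'] uu(2) h(2) by blast
            then have "u' \<in> Sset" using SbdK by blast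
            then show False using uu(2) by blast
          qed
        qed
      qed
      then have allK: "\<forall>h\<in>F. z' \<in> h \<longrightarrow> h \<in> K" unfolding P_def by blast
      obtain e where e: "e \<in> OE" "z' \<in> e" using z' OV_def' by blast
      have "fc e \<noteq> {}" using fc_ne OE_E e(1) by blast
      then obtain h' where h': "h' \<in> F" "e \<subseteq> h'" unfolding fc_def by blast
      have "h' \<in> K" using allK h' e by blast
      then show False using outer_face_notinR[OF e(1) h'] K(1) by blast
    qed
    show ?thesis using cS adj sep by blast
  qed
  show ?thesis using S3 D3 eq by blast
qed

end

theorem lemma2p7:
  fixes V :: "'a set" and E F :: "'a set set"
  assumes nt: "near_triangulation V E F"
    and inner: "V - outer_vertices E F \<noteq> {}"
    and no_ear: "\<not> (\<exists>v\<in>V - outer_vertices E F. \<exists>u w. {u, w} \<in> outer_edges E F \<and> {v, u, w} \<in> F)"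
  defines "S \<equiv> {x\<in>outer_vertices E F. \<exists>y\<in>V - outer_vertices E F. {x, y} \<in> E}"
    and "D2 \<equiv> {x\<in>outer_vertices E F. gdeg E x = 2}"
  shows "card S \<ge> 3 \<and> card D2 \<ge> 3 \<and>
         (card D2 = 3 \<longrightarrow>
            card S = 3 \<and> (\<forall>x\<in>S. \<forall>y\<in>S. x \<noteq> y \<longrightarrow> {x, y} \<in> E) \<and>
            (\<forall>v\<in>V - outer_vertices E F. \<forall>z\<in>outer_vertices E F - S.
                \<not> reach_avoiding V E S v z))"
proof -
  have i: "NT2 V E F" unfolding NT2_def NT2_axioms_def NT_def using nt no_ear by blast
  interpret NT2 V E F by (rule i)
  have S: "S = Sset" unfolding S_def Sset_def by simp
  have D: "D2 = D2set" unfolding D2_def D2set_def by simp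
  show ?thesis unfolding S D using main[OF inner] .
qed

end
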